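(* Consider the connections $\Gamma_1^1$, $\Gamma_2^1(c)$ and $\Gamma_3^1(c)$ for $c\notin\{0,-1\}$, $\Gamma_4^1(c)$ and $\Gamma_5^1(c)$ for $c\in\mathbb R$. Two of these are locally affinely equivalent if and only if one of the following holds: (1) both belong to $\{\Gamma_1^1\}\cup\{\Gamma_4^1(c):c\in\mathbb R\}$ (all of these are mutually affinely equivalent); (2) they are $\Gamma_i^1(c)$ and $\Gamma_j^1(\tilde c)$ with $i,j\in\{2,3\}$ and $c=\tilde c$ or $c=-1-\tilde c$; (3) they are $\Gamma_5^1(c)$ and $\Gamma_5^1(\tilde c)$ with $c=\pm\tilde c$.
   Context: A torsion-free connection has Christoffel symbols $\nabla_{\partial_{x^i}}\partial_{x^j}=\Gamma_{ij}^k\partial_{x^k}$. For real constants, $\Gamma(a,b,c,d,e,f)$ denotes the connection on $\mathbb R^2$ with constant Christoffel symbols $\Gamma_{11}^1=a$, $\Gamma_{11}^2=b$, $\Gamma_{12}^1=\Gamma_{21}^1=c$, $\Gamma_{12}^2=\Gamma_{21}^2=d$, $\Gamma_{22}^1=e$, $\Gamma_{22}^2=f$ (Type $\mathcal A$ connections). Two connections $\nabla,\tilde\nabla$ on $\mathbb R^2$ are (locally) affinely equivalent if there exist open sets $U,V\subset\mathbb R^2$ and a diffeomorphism $T:U\to V$ with $T^*\tilde\nabla=\nabla$ on $U$. The specific connections: $\Gamma_1^1:=\Gamma(-1,0,1,0,0,2)$; $\Gamma_2^1(c):=\Gamma(-1,0,c,0,0,1+2c)$; $\Gamma_3^1(c):=\Gamma(0,0,c,0,0,1+2c)$;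 $\Gamma_4^1(c):=\Gamma(0,0,1,0,c,2)$; $\Gamma_5^1(c):=\Gamma(1,0,0,0,1+c^2,2c)$. *)

theory Defs
  imports "HOL-Analysis.Analysis"
begin

text \<open>Points of R^2 are pairs; coordinate x^1 has index 0, x^2 has index 1.\<close>

definition coord :: "nat \<Rightarrow> real \<times> real \<Rightarrow> real" where
  "coord k p = (if k = 0 then fst p else snd p)"

definition unitv :: "nat \<Rightarrow> real \<times> real" where
  "unitv i = (if i = 0 then (1, 0) else (0, 1))"

definition pd :: "nat \<Rightarrow> (real \<times> real \<Rightarrow> real) \<Rightarrow> real \<times> real \<Rightarrow> real" where
  "pd i f x = deriv (\<lambda>t. f (x + t *\<^sub>R unitv i)) 0"

fun Ck_on :: "nat \<Rightarrow> (real \<times> real) set \<Rightarrow> (real \<times> real \<Rightarrow> real) \<Rightarrow> bool" where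
  "Ck_on 0 U f = continuous_on U f"
| "Ck_on (Suc k) U f = (continuous_on U f \<and>
     (\<forall>x\<in>U. \<forall>i<2. (\<lambda>t. f (x + t *\<^sub>R unitv i)) differentiable (at 0)) \<and>
     (\<forall>i<2. Ck_on k U (pd i f)))"

definition smooth_fun_on :: "(real \<times> real) set \<Rightarrow> (real \<times> real \<Rightarrow> real) \<Rightarrow> bool" where
  "smooth_fun_on U f = (\<forall>k. Ck_on k U f)"

definition smooth_map_on :: "(real \<times> real) set \<Rightarrow> (real \<times> real \<Rightarrow> real \<times> real) \<Rightarrow> bool" where
  "smooth_map_on U T = (\<forall>k<2. smooth_fun_on U (\<lambda>p. coord k (T p)))"

text \<open>A connection with constant Christoffel symbols: G i j k = Gamma_{ij}^k (indices 0,1).\<close>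
type_synonym christoffel = "nat \<Rightarrow> nat \<Rightarrow> nat \<Rightarrow> real"

definition Gam :: "real \<Rightarrow> real \<Rightarrow> real \<Rightarrow> real \<Rightarrow> real \<Rightarrow> real \<Rightarrow> christoffel" where
  "Gam a b c d e f = (\<lambda>i j k.
     if i = 0 \<and> j = 0 then (if k = 0 then a else b)
     else if i = 1 \<and> j = 1 then (if k = 0 then e else f)
     else (if k = 0 then c else d))"

text \<open>Pullback condition T^* G' = G on U, written in coordinates:
  d_i d_j T^k + sum_{a,b} G'_{ab}^k d_i T^a d_j T^b = sum_l d_l T^k G_{ij}^l.\<close>
definition pullback_eq :: "(real \<times> real) set \<Rightarrow> (real \<times> real \<Rightarrow> real \<times> real)
    \<Rightarrow> christoffel \<Rightarrow> christoffel \<Rightarrow> bool" where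
  "pullback_eq U T G G' = (\<forall>x\<in>U. \<forall>i<2. \<forall>j<2. \<forall>k<2.
     pd i (pd j (\<lambda>p. coord k (T p))) x
     + (\<Sum>a<2. \<Sum>b<2. G' a b k * pd i (\<lambda>p. coord a (T p)) x * pd j (\<lambda>p. coord b (T p)) x)
     = (\<Sum>l<2. pd l (\<lambda>p. coord k (T p)) x * G i j l))"

definition affinely_equivalent :: "christoffel \<Rightarrow> christoffel \<Rightarrow> bool" where
  "affinely_equivalent G G' = (\<exists>U V T S.
     open U \<and> U \<noteq> {} \<and> open V \<and> T ` U = V \<and> S ` V = U \<and>
     (\<forall>x\<in>U. S (T x) = x) \<and> (\<forall>y\<in>V. T (S y) = y) \<and>
     smooth_map_on U T \<and> smooth_map_on V S \<and> pullback_eq U T G G')"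

text \<open>The family Gamma_i^1(c); for i = 1 the parameter c is ignored.\<close>
definition GammaF :: "nat \<Rightarrow> real \<Rightarrow> christoffel" where
  "GammaF i c = (if i = 1 then Gam (-1) 0 1 0 0 2
     else if i = 2 then Gam (-1) 0 c 0 0 (1 + 2*c)
     else if i = 3 then Gam 0 0 c 0 0 (1 + 2*c)
     else if i = 4 then Gam 0 0 1 0 c 2
     else Gam 1 0 0 0 (1 + c^2) (2*c))"

definition admissible :: "nat \<Rightarrow> real \<Rightarrow> bool" where
  "admissible i c = (i \<in> {1,4,5} \<or> (i \<in> {2,3} \<and> c \<noteq> 0 \<and> c \<noteq> -1))"

end

theory Submission
  imports Defs
begin

abbreviation pdiff :: "nat \<Rightarrow> (real \<times> real \<Rightarrow> real) \<Rightarrow> real \<times> real \<Rightarrow> bool" where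
  "pdiff i f z \<equiv> (\<lambda>t. f (z + t *\<^sub>R unitv i)) differentiable (at 0)"

lemma pd_DERIV:
  assumes "pdiff i f z"
  shows "((\<lambda>t. f (z + t *\<^sub>R unitv i)) has_real_derivative pd i f z) (at 0)"
  using assms unfolding pd_def by (simp add: DERIV_deriv_iff_real_differentiable)

lemma pd_eqI:
  assumes "((\<lambda>t. f (z + t *\<^sub>R unitv i)) has_real_derivative D) (at 0)"
  shows "pd i f z = D"
  using assms unfolding pd_def by (rule DERIV_imp_deriv)

lemma line0: "z + t *\<^sub>R unitv 0 = (fst z + t, snd z)"
  by (simp add: unitv_def prod_eq_iff)
lemma line1: "z + t *\<^sub>R unitv (Suc 0) = (fst z, snd z + t)"
  by (simp add: unitv_def prod_eq_iff)

lemma norm_unitv: "norm (unitv i) = 1"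
  by (simp add: unitv_def norm_Pair)

lemma eventually_line:
  assumes "open U" "z \<in> U"
  shows "eventually (\<lambda>t. z + t *\<^sub>R unitv i \<in> U) (nhds 0)"
proof -
  obtain e where e: "e > 0" "ball z e \<subseteq> U" using assms open_contains_ball by blast
  have "\<forall>t. dist t 0 < e \<longrightarrow> z + t *\<^sub>R unitv i \<in> U"
  proof (intro allI impI)
    fix t :: real assume "dist t 0 < e"
    then have "dist z (z + t *\<^sub>R unitv i) < e" by (simp add: dist_norm norm_unitv)
    then show "z + t *\<^sub>R unitv i \<in> U" using e by auto
  qed
  then show ?thesis unfolding eventually_nhds_metric using e(1) by blast
qed

lemma ev_eq_line:
  assumes "open U" "z \<in> U" "\<And>y. y \<in> U \<Longrightarrow> f y = g y"
  shows "eventually (\<lambda>t. f (z + t *\<^sub>R unitv i) = g (z + t *\<^sub>R unitv i)) (nhds 0)"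
proof -
  have *: "\<And>t. z + t *\<^sub>R unitv i \<in> U \<Longrightarrow> f (z + t *\<^sub>R unitv i) = g (z + t *\<^sub>R unitv i)"
    using assms(3) by blast
  from eventually_line[OF assms(1,2), of i] show ?thesis by (rule eventually_mono) (rule *)
qed

lemma pd_local:
  assumes "open U" "z \<in> U" "\<And>y. y \<in> U \<Longrightarrow> f y = g y"
  shows "pd i f z = pd i g z"
proof -
  have ev: "eventually (\<lambda>t. f (z + t *\<^sub>R unitv i) = g (z + t *\<^sub>R unitv i)) (nhds 0)"
    by (rule ev_eq_line[OF assms(1,2)]) (rule assms(3))
  show ?thesis unfolding pd_def by (rule deriv_cong_ev[OF ev refl])
qed

lemma pdiff_local:
  assumes "open U" "z \<in> U" "\<And>y. y \<in> U \<Longrightarrow> f y = g y" "pdiff i f z"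
  shows "pdiff i g z"
proof -
  have 1: "((\<lambda>t. f (z + t *\<^sub>R unitv i)) has_real_derivative pd i f z) (at 0)"
    using assms(4) by (rule pd_DERIV)
  have "((\<lambda>t. g (z + t *\<^sub>R unitv i)) has_real_derivative pd i f z) (at 0)"
  proof -
    have ev: "eventually (\<lambda>t. f (z + t *\<^sub>R unitv i) = g (z + t *\<^sub>R unitv i)) (nhds 0)"
      by (rule ev_eq_line[OF assms(1,2)]) (rule assms(3))
    show ?thesis using DERIV_cong_ev[OF refl ev refl] 1 by simp
  qed
  then show ?thesis by (auto simp: real_differentiable_def)
qed

lemma DERIV_line0:
  assumes "pdiff 0 f (a,b)"
  shows "((\<lambda>s. f (s,b)) has_real_derivative pd 0 f (a,b)) (at a)"
proof -
  have "((\<lambda>t. f (a + t, b)) has_real_derivative pd 0 f (a,b)) (at 0)"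
    using pd_DERIV[OF assms] by (simp add: line0)
  then have "((\<lambda>t. (\<lambda>s. f (s,b)) (t + a)) has_real_derivative pd 0 f (a,b)) (at 0)"
    by (simp add: add.commute)
  then show ?thesis using DERIV_shift[of "\<lambda>s. f (s,b)" _ 0 a] by simp
qed

lemma DERIV_line1:
  assumes "pdiff 1 f (a,b)"
  shows "((\<lambda>s. f (a,s)) has_real_derivative pd 1 f (a,b)) (at b)"
proof -
  have "((\<lambda>t. f (a, b + t)) has_real_derivative pd 1 f (a,b)) (at 0)"
    using pd_DERIV[OF assms] by (simp add: line1)
  then have "((\<lambda>t. (\<lambda>s. f (a,s)) (t + b)) has_real_derivative pd 1 f (a,b)) (at 0)"
    by (simp add: add.commute)
  then show ?thesis using DERIV_shift[of "\<lambda>s. f (a,s)" _ 0 b] by simp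
qed

lemma Ck_mono: "Ck_on (Suc k) U f \<Longrightarrow> Ck_on k U f"
  by (induction k arbitrary: f) auto

lemma Ck_le: "Ck_on k U f \<Longrightarrow> m \<le> k \<Longrightarrow> Ck_on m U f"
proof (induction k)
  case 0 then show ?case by simp
next
  case (Suc k) then show ?case by (metis Ck_mono le_Suc_eq)
qed

lemma Ck1_D:
  assumes "Ck_on (Suc k) U f" "i < 2" "z \<in> U"
  shows "pdiff i f z" "Ck_on k U (pd i f)" "continuous_on U f"
  using assms by auto

lemma dist_small:
  fixes x0 y0 s t h d :: real
  assumes "0 \<le> s" "s \<le> h" "0 \<le> t" "t \<le> h" "h = d/2" "d > 0"
  shows "(x0 + s, y0 + t) \<in> ball (x0, y0) d"
proof -
  have "s^2 + t^2 < d^2"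
  proof -
    have "s^2 \<le> h^2" "t^2 \<le> h^2" using assms by (auto intro!: power_mono)
    moreover have "0 < d * d" using mult_pos_pos[OF assms(6) assms(6)] .
    moreover have "d * d = 4 * (h * h)" unfolding assms(5) by (simp add: field_simps)
    ultimately show ?thesis using assms unfolding power2_eq_square by linarith
  qed
  then have "sqrt (s^2 + t^2) < d" using real_sqrt_less_mono[of "s^2 + t^2" "d^2"] assms(6) by simp
  then show ?thesis by (simp add: dist_Pair_Pair dist_real_def mem_ball)
qed

lemma schwarz:
  assumes U: "open U" and g: "Ck_on 2 U g" and z: "z \<in> U"
  shows "pd 1 (pd 0 g) z = pd 0 (pd 1 g) z"
proof (rule ccontr)
  define A where "A = pd 1 (pd 0 g)"
  define B where "B = pd 0 (pd 1 g)"
  obtain x0 y0 where z0: "z = (x0, y0)" by (cases z)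
  assume ne: "pd 1 (pd 0 g) z \<noteq> pd 0 (pd 1 g) z"
  define e where "e = \<bar>A z - B z\<bar> / 2"
  have e: "e > 0" using ne by (simp add: e_def A_def B_def)
  have g1: "\<And>y i. y \<in> U \<Longrightarrow> i < 2 \<Longrightarrow> pdiff i g y"
    and g2: "\<And>y i j. y \<in> U \<Longrightarrow> i < 2 \<Longrightarrow> j < 2 \<Longrightarrow> pdiff j (pd i g) y"
    and cA: "continuous_on U A" and cB: "continuous_on U B"
  proof -
    have g': "Ck_on (Suc (Suc 0)) U g" using g by (simp add: numeral_2_eq_2)
    show "\<And>y i. y \<in> U \<Longrightarrow> i < 2 \<Longrightarrow> pdiff i g y" using g' by simp
    show "\<And>y i j. y \<in> U \<Longrightarrow> i < 2 \<Longrightarrow> j < 2 \<Longrightarrow> pdiff j (pd i g) y" using g' by simp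
    show "continuous_on U A" using g' by (simp add: A_def)
    show "continuous_on U B" using g' by (simp add: B_def)
  qed
  obtain d1 where d1: "d1 > 0" "\<And>y. y \<in> U \<Longrightarrow> dist y z < d1 \<Longrightarrow> dist (A y) (A z) < e"
    using cA z e unfolding continuous_on_iff by blast
  obtain d2 where d2: "d2 > 0" "\<And>y. y \<in> U \<Longrightarrow> dist y z < d2 \<Longrightarrow> dist (B y) (B z) < e"
    using cB z e unfolding continuous_on_iff by blast
  obtain d3 where d3: "d3 > 0" "ball z d3 \<subseteq> U"
    using U z open_contains_ball by blast
  define d where "d = min d1 (min d2 d3)"
  have d: "d > 0" using d1 d2 d3 by (simp add: d_def)
  have inB: "\<And>y. y \<in> ball z d \<Longrightarrow> y \<in> U \<and> \<bar>A y - A z\<bar> < e \<and> \<bar>B y - B z\<bar> < e"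
  proof -
    fix y assume y: "y \<in> ball z d"
    then have yU: "y \<in> U" using d3 by (auto simp: d_def)
    moreover have "dist y z < d1" "dist y z < d2" using y by (auto simp: d_def dist_commute)
    ultimately show "y \<in> U \<and> \<bar>A y - A z\<bar> < e \<and> \<bar>B y - B z\<bar> < e"
      using d1 d2 by (auto simp: dist_real_def)
  qed
  define h where "h = d/2"
  have h: "h > 0" using d by (simp add: h_def)
  have sq: "\<And>s t. 0 \<le> s \<Longrightarrow> s \<le> h \<Longrightarrow> 0 \<le> t \<Longrightarrow> t \<le> h \<Longrightarrow>
      (x0 + s, y0 + t) \<in> U \<and> \<bar>A (x0 + s, y0 + t) - A z\<bar> < e \<and> \<bar>B (x0 + s, y0 + t) - B z\<bar> < e"
  proof -
    fix s t assume st: "0 \<le> s" "s \<le> h" "0 \<le> t" "t \<le> h"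
    have "(x0 + s, y0 + t) \<in> ball z d" using dist_small[OF st h_def d] z0 by simp
    then show "(x0 + s, y0 + t) \<in> U \<and> \<bar>A (x0 + s, y0 + t) - A z\<bar> < e \<and> \<bar>B (x0 + s, y0 + t) - B z\<bar> < e"
      by (rule inB)
  qed
  have sq': "\<And>s t. x0 \<le> s \<Longrightarrow> s \<le> x0 + h \<Longrightarrow> y0 \<le> t \<Longrightarrow> t \<le> y0 + h \<Longrightarrow>
      (s, t) \<in> U \<and> \<bar>A (s, t) - A z\<bar> < e \<and> \<bar>B (s, t) - B z\<bar> < e"
  proof -
    fix s t assume "x0 \<le> s" "s \<le> x0 + h" "y0 \<le> t" "t \<le> y0 + h"
    then show "(s, t) \<in> U \<and> \<bar>A (s, t) - A z\<bar> < e \<and> \<bar>B (s, t) - B z\<bar> < e"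
      using sq[of "s - x0" "t - y0"] by simp
  qed
  define \<Delta> where "\<Delta> = g (x0+h, y0+h) - g (x0+h, y0) - g (x0, y0+h) + g (x0, y0)"
  have "\<exists>\<xi>. x0 < \<xi> \<and> \<xi> < x0 + h \<and> (g (x0+h, y0+h) - g (x0+h, y0)) - (g (x0, y0+h) - g (x0, y0))
          = (x0 + h - x0) * (pd 0 g (\<xi>, y0+h) - pd 0 g (\<xi>, y0))"
  proof (rule MVT2[where f="\<lambda>s. g (s, y0+h) - g (s, y0)" and f'="\<lambda>s. pd 0 g (s, y0+h) - pd 0 g (s, y0)"])
    fix x assume x: "x0 \<le> x" "x \<le> x0 + h"
    have "(x, y0+h) \<in> U" "(x, y0) \<in> U" using sq'[of x "y0+h"] sq'[of x y0] x h by auto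
    then show "((\<lambda>s. g (s, y0+h) - g (s, y0)) has_real_derivative pd 0 g (x, y0+h) - pd 0 g (x, y0)) (at x)"
      by (intro DERIV_diff DERIV_line0 g1) auto
  qed (use h in simp)
  then obtain \<xi> where xi: "x0 < \<xi>" "\<xi> < x0 + h" "\<Delta> = h * (pd 0 g (\<xi>, y0+h) - pd 0 g (\<xi>, y0))"
    by (auto simp: \<Delta>_def)
  have "\<exists>\<eta>. y0 < \<eta> \<and> \<eta> < y0 + h \<and> pd 0 g (\<xi>, y0+h) - pd 0 g (\<xi>, y0) = (y0 + h - y0) * A (\<xi>, \<eta>)"
  proof (rule MVT2[where f="\<lambda>t. pd 0 g (\<xi>, t)" and f'="\<lambda>t. A (\<xi>, t)"])
    fix x assume x: "y0 \<le> x" "x \<le> y0 + h"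
    have "(\<xi>, x) \<in> U" using sq'[of \<xi> x] x xi by auto
    then show "((\<lambda>t. pd 0 g (\<xi>, t)) has_real_derivative A (\<xi>, x)) (at x)"
      unfolding A_def by (intro DERIV_line1 g2) auto
  qed (use h in simp)
  then obtain \<eta> where eta: "y0 < \<eta>" "\<eta> < y0 + h" "\<Delta> = h * h * A (\<xi>, \<eta>)"
    using xi by auto
  have "\<exists>\<eta>. y0 < \<eta> \<and> \<eta> < y0 + h \<and> (g (x0+h, y0+h) - g (x0, y0+h)) - (g (x0+h, y0) - g (x0, y0))
          = (y0 + h - y0) * (pd 1 g (x0+h, \<eta>) - pd 1 g (x0, \<eta>))"
  proof (rule MVT2[where f="\<lambda>t. g (x0+h, t) - g (x0, t)" and f'="\<lambda>t. pd 1 g (x0+h, t) - pd 1 g (x0, t)"])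
    fix x assume x: "y0 \<le> x" "x \<le> y0 + h"
    have "(x0+h, x) \<in> U" "(x0, x) \<in> U" using sq'[of "x0+h" x] sq'[of x0 x] x h by auto
    then show "((\<lambda>t. g (x0+h, t) - g (x0, t)) has_real_derivative pd 1 g (x0+h, x) - pd 1 g (x0, x)) (at x)"
      by (intro DERIV_diff DERIV_line1 g1) auto
  qed (use h in simp)
  then obtain \<eta>' where eta': "y0 < \<eta>'" "\<eta>' < y0 + h" "\<Delta> = h * (pd 1 g (x0+h, \<eta>') - pd 1 g (x0, \<eta>'))"
    by (auto simp: \<Delta>_def algebra_simps)
  have "\<exists>\<xi>. x0 < \<xi> \<and> \<xi> < x0 + h \<and> pd 1 g (x0+h, \<eta>') - pd 1 g (x0, \<eta>') = (x0 + h - x0) * B (\<xi>, \<eta>')"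
  proof (rule MVT2[where f="\<lambda>s. pd 1 g (s, \<eta>')" and f'="\<lambda>s. B (s, \<eta>')"])
    fix x assume x: "x0 \<le> x" "x \<le> x0 + h"
    have "(x, \<eta>') \<in> U" using sq'[of x \<eta>'] x eta' by auto
    then show "((\<lambda>s. pd 1 g (s, \<eta>')) has_real_derivative B (x, \<eta>')) (at x)"
      unfolding B_def by (intro DERIV_line0 g2) auto
  qed (use h in simp)
  then obtain \<xi>' where xi': "x0 < \<xi>'" "\<xi>' < x0 + h" "\<Delta> = h * h * B (\<xi>', \<eta>')"
    using eta' by auto
  have AB: "A (\<xi>, \<eta>) = B (\<xi>', \<eta>')" using eta xi' h by simp
  have "\<bar>A (\<xi>, \<eta>) - A z\<bar> < e" "\<bar>B (\<xi>', \<eta>') - B z\<bar> < e"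
    using sq'[of \<xi> \<eta>] sq'[of \<xi>' \<eta>'] xi eta xi' eta' by auto
  then have "\<bar>A z - B z\<bar> < 2 * e" using AB by linarith
  then show False by (simp add: e_def)
qed

lemma smooth_pd: "smooth_fun_on U f \<Longrightarrow> i < 2 \<Longrightarrow> smooth_fun_on U (pd i f)"
  unfolding smooth_fun_on_def by (metis Ck_on.simps(2))

lemma smooth_pdiff: "smooth_fun_on U f \<Longrightarrow> x \<in> U \<Longrightarrow> i < 2 \<Longrightarrow> pdiff i f x"
  unfolding smooth_fun_on_def by (metis Ck_on.simps(2))

lemma smooth_cont: "smooth_fun_on U f \<Longrightarrow> continuous_on U f"
  unfolding smooth_fun_on_def by (metis Ck_on.simps(1))

lemma smooth_schwarz: "open U \<Longrightarrow> smooth_fun_on U g \<Longrightarrow> z \<in> U \<Longrightarrow> pd 1 (pd 0 g) z = pd 0 (pd 1 g) z"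
  unfolding smooth_fun_on_def by (rule schwarz) auto

definition pdf :: "nat \<Rightarrow> (real \<times> real \<Rightarrow> real) \<Rightarrow> real \<times> real \<Rightarrow> bool" where
  "pdf i f z = pdiff i f z"

lemma smooth_pdf: "smooth_fun_on U f \<Longrightarrow> x \<in> U \<Longrightarrow> i < 2 \<Longrightarrow> pdf i f x"
  unfolding pdf_def by (rule smooth_pdiff)

lemma pdf_const: "pdf i (\<lambda>x. k) z" by (simp add: pdf_def)

lemma pdf_add: "pdf i f z \<Longrightarrow> pdf i g z \<Longrightarrow> pdf i (\<lambda>x. f x + g x) z"
  unfolding pdf_def by (rule differentiable_add)
lemma pdf_diff: "pdf i f z \<Longrightarrow> pdf i g z \<Longrightarrow> pdf i (\<lambda>x. f x - g x) z"
  unfolding pdf_def by (rule differentiable_diff)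
lemma pdf_mult: "pdf i f z \<Longrightarrow> pdf i g z \<Longrightarrow> pdf i (\<lambda>x. f x * g x) z"
  unfolding pdf_def by (rule differentiable_mult)

lemma pd_const: "pd i (\<lambda>x. k) z = 0"
  by (rule pd_eqI) simp

lemma pd_add: "pdf i f z \<Longrightarrow> pdf i g z \<Longrightarrow> pd i (\<lambda>x. f x + g x) z = pd i f z + pd i g z"
  unfolding pdf_def by (rule pd_eqI) (intro DERIV_add pd_DERIV)
lemma pd_diff: "pdf i f z \<Longrightarrow> pdf i g z \<Longrightarrow> pd i (\<lambda>x. f x - g x) z = pd i f z - pd i g z"
  unfolding pdf_def by (rule pd_eqI) (intro DERIV_diff pd_DERIV)
lemma pd_mult: "pdf i f z \<Longrightarrow> pdf i g z \<Longrightarrow> pd i (\<lambda>x. f x * g x) z = pd i f z * g z + f z * pd i g z"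
proof -
  assume a: "pdf i f z" "pdf i g z"
  have "((\<lambda>t. f (z + t *\<^sub>R unitv i) * g (z + t *\<^sub>R unitv i)) has_real_derivative
      pd i f z * g (z + 0 *\<^sub>R unitv i) + pd i g z * f (z + 0 *\<^sub>R unitv i)) (at 0)"
    using a unfolding pdf_def by (intro DERIV_mult pd_DERIV)
  then show ?thesis by (intro pd_eqI) (simp add: algebra_simps)
qed

lemmas pd_rules = pd_const pd_add pd_diff pd_mult pdf_const pdf_add pdf_diff pdf_mult

lemma sum2: "(\<Sum>a<2. F a) = F 0 + F (1::nat)" for F :: "nat \<Rightarrow> real"
  by (simp add: numeral_2_eq_2)

lemma pb_expand:
  fixes u v :: "real \<times> real \<Rightarrow> real"
  assumes pb: "pullback_eq U T (Gam a 0 c 0 e f) (Gam a' 0 c' 0 e' f')"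
    and uv: "u = (\<lambda>p. coord 0 (T p))" "v = (\<lambda>p. coord 1 (T p))"
    and x: "x \<in> U"
  shows "pd 0 (pd 0 v) x + f' * (pd 0 v x * pd 0 v x) = a * pd 0 v x"
    "pd 0 (pd 1 v) x + f' * (pd 0 v x * pd 1 v x) = c * pd 0 v x"
    "pd 1 (pd 0 v) x + f' * (pd 1 v x * pd 0 v x) = c * pd 0 v x"
    "pd 1 (pd 1 v) x + f' * (pd 1 v x * pd 1 v x) = e * pd 0 v x + f * pd 1 v x"
    "pd 0 (pd 0 u) x + a' * (pd 0 u x * pd 0 u x) + c' * (pd 0 u x * pd 0 v x + pd 0 v x * pd 0 u x) + e' * (pd 0 v x * pd 0 v x) = a * pd 0 u x"
    "pd 0 (pd 1 u) x + a' * (pd 0 u x * pd 1 u x) + c' * (pd 0 u x * pd 1 v x + pd 0 v x * pd 1 u x) + e' * (pd 0 v x * pd 1 v x) = c * pd 0 u x"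
    "pd 1 (pd 0 u) x + a' * (pd 1 u x * pd 0 u x) + c' * (pd 1 u x * pd 0 v x + pd 1 v x * pd 0 u x) + e' * (pd 1 v x * pd 0 v x) = c * pd 0 u x"
    "pd 1 (pd 1 u) x + a' * (pd 1 u x * pd 1 u x) + c' * (pd 1 u x * pd 1 v x + pd 1 v x * pd 1 u x) + e' * (pd 1 v x * pd 1 v x) = e * pd 0 u x + f * pd 1 u x"
proof -
  have P: "\<And>i j k. i < 2 \<Longrightarrow> j < 2 \<Longrightarrow> k < 2 \<Longrightarrow>
     pd i (pd j (\<lambda>p. coord k (T p))) x
     + (\<Sum>a<2. \<Sum>b<2. Gam a' 0 c' 0 e' f' a b k * pd i (\<lambda>p. coord a (T p)) x * pd j (\<lambda>p. coord b (T p)) x)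
     = (\<Sum>l<2. pd l (\<lambda>p. coord k (T p)) x * Gam a 0 c 0 e f i j l)"
    using pb x unfolding pullback_eq_def by blast
  note P' = P[unfolded sum2, folded uv]
  show "pd 0 (pd 0 v) x + f' * (pd 0 v x * pd 0 v x) = a * pd 0 v x"
    using P'[of 0 0 1] by (simp add: Gam_def algebra_simps uv)
  show "pd 0 (pd 1 v) x + f' * (pd 0 v x * pd 1 v x) = c * pd 0 v x"
    using P'[of 0 1 1] by (simp add: Gam_def algebra_simps uv)
  show "pd 1 (pd 0 v) x + f' * (pd 1 v x * pd 0 v x) = c * pd 0 v x"
    using P'[of 1 0 1] by (simp add: Gam_def algebra_simps uv)
  show "pd 1 (pd 1 v) x + f' * (pd 1 v x * pd 1 v x) = e * pd 0 v x + f * pd 1 v x"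
    using P'[of 1 1 1] by (simp add: Gam_def algebra_simps uv)
  show "pd 0 (pd 0 u) x + a' * (pd 0 u x * pd 0 u x) + c' * (pd 0 u x * pd 0 v x + pd 0 v x * pd 0 u x) + e' * (pd 0 v x * pd 0 v x) = a * pd 0 u x"
    using P'[of 0 0 0] by (simp add: Gam_def algebra_simps uv)
  show "pd 0 (pd 1 u) x + a' * (pd 0 u x * pd 1 u x) + c' * (pd 0 u x * pd 1 v x + pd 0 v x * pd 1 u x) + e' * (pd 0 v x * pd 1 v x) = c * pd 0 u x"
    using P'[of 0 1 0] by (simp add: Gam_def algebra_simps uv)
  show "pd 1 (pd 0 u) x + a' * (pd 1 u x * pd 0 u x) + c' * (pd 1 u x * pd 0 v x + pd 1 v x * pd 0 u x) + e' * (pd 1 v x * pd 0 v x) = c * pd 0 u x"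
    using P'[of 1 0 0] by (simp add: Gam_def algebra_simps uv)
  show "pd 1 (pd 1 u) x + a' * (pd 1 u x * pd 1 u x) + c' * (pd 1 u x * pd 1 v x + pd 1 v x * pd 1 u x) + e' * (pd 1 v x * pd 1 v x) = e * pd 0 u x + f * pd 1 u x"
    using P'[of 1 1 0] by (simp add: Gam_def algebra_simps uv)
qed

lemma alg_K:
  fixes a c e f a' c' e' f' P Q q P0 P1 Q0 Q1 q0 q1 :: real
  assumes "c * P1 - a' * (P1 * Q + P * Q1) - c' * (P1 * q + P * q1) =
     e * P0 + f * Q0 - a' * (Q0 * Q + Q * Q0) - c' * (Q0 * q + Q * q0) - c' * (Q0 * q + Q * q0) - e' * (q0 * q + q * q0)"
   and "Q0 = c * P - a' * (P * Q) - c' * (P * q)"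
   and "Q1 = e * P + f * Q - a' * (Q * Q) - c' * (Q * q) - c' * (Q * q) - e' * (q * q)"
   and "P0 = a * P - a' * (P * P)" and "P1 = c * P - a' * (Q * P) - c' * (q * P)"
   and "q0 = 0" and "q1 = f * q - f' * (q * q)"
  shows "P * ((a' * e' + c' * f' - c' * c') * (q * q) - (a * e + c * f - c * c)) = 0"
proof -
  have id: "(c * P1 - a' * (P1 * Q + P * Q1) - c' * (P1 * q + P * q1)) -
     (e * P0 + f * Q0 - a' * (Q0 * Q + Q * Q0) - c' * (Q0 * q + Q * q0) - c' * (Q0 * q + Q * q0) - e' * (q0 * q + q * q0))
     = P * ((a' * e' + c' * f' - c' * c') * (q * q) - (a * e + c * f - c * c))"
    unfolding assms(2-7) by algebra
  show ?thesis using id assms(1) by simp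
qed

lemma invariant:
  fixes a c e f a' c' e' f' :: real
  assumes U: "open U" "U \<noteq> {}" and inj: "\<forall>x\<in>U. S (T x) = x" and sm: "smooth_map_on U T"
    and pb: "pullback_eq U T (Gam a 0 c 0 e f) (Gam a' 0 c' 0 e' f')"
    and r: "a*e + c*f - c*c \<noteq> 0"
  shows "f*f*(a'*e' + c'*f' - c'*c') = f'*f'*(a*e + c*f - c*c) \<and> 0 < (a*e + c*f - c*c)*(a'*e' + c'*f' - c'*c')"
proof -
  define r where "r = a*e + c*f - c*c"
  define r' where "r' = a'*e' + c'*f' - c'*c'"
  define u where "u = (\<lambda>p. coord 0 (T p))"
  define v where "v = (\<lambda>p. coord 1 (T p))"
  have su: "smooth_fun_on U u" and sv: "smooth_fun_on U v"
    using sm by (auto simp: smooth_map_on_def u_def v_def)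
  note E = pb_expand[OF pb u_def v_def]
  define p where "p = pd 0 v"
  define q where "q = pd 1 v"
  define P where "P = pd 0 u"
  define Q where "Q = pd 1 u"
  have sp: "smooth_fun_on U p" and sq: "smooth_fun_on U q" and sP: "smooth_fun_on U P" and sQ: "smooth_fun_on U Q"
    using su sv by (auto simp: p_def q_def P_def Q_def intro: smooth_pd)
  have dd: "\<And>z. z \<in> U \<Longrightarrow> pdf 0 p z \<and> pdf 1 p z \<and> pdf 0 q z \<and> pdf 1 q z \<and> pdf 0 P z \<and> pdf 1 P z \<and> pdf 0 Q z \<and> pdf 1 Q z"
    using sp sq sP sQ by (auto intro: smooth_pdf)
  have p0: "p z = 0" if z: "z \<in> U" for z
  proof -
    have h1: "pd 1 (pd 0 q) z = pd 0 (pd 1 q) z" by (rule smooth_schwarz[OF U(1) sq z])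
    have "pd 1 (pd 0 q) z = pd 1 (\<lambda>x. c * p x - f' * (p x * q x)) z"
    proof (rule pd_local[OF U(1) z])
      fix y assume y: "y \<in> U"
      show "pd 0 q y = c * p y - f' * (p y * q y)" using E(2)[OF y] unfolding p_def q_def by linarith
    qed
    also have "\<dots> = c * pd 1 p z - f' * (pd 1 p z * q z + p z * pd 1 q z)"
      using dd[OF z] by (simp add: pd_rules)
    finally have L: "pd 1 (pd 0 q) z = c * pd 1 p z - f' * (pd 1 p z * q z + p z * pd 1 q z)" .
    have "pd 0 (pd 1 q) z = pd 0 (\<lambda>x. e * p x + f * q x - f' * (q x * q x)) z"
    proof (rule pd_local[OF U(1) z])
      fix y assume y: "y \<in> U"
      show "pd 1 q y = e * p y + f * q y - f' * (q y * q y)" using E(4)[OF y] unfolding p_def q_def by linarith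
    qed
    also have "\<dots> = e * pd 0 p z + f * pd 0 q z - f' * (pd 0 q z * q z + q z * pd 0 q z)"
      using dd[OF z] by (simp add: pd_rules)
    finally have R: "pd 0 (pd 1 q) z = e * pd 0 p z + f * pd 0 q z - f' * (pd 0 q z * q z + q z * pd 0 q z)" .
    have v1: "pd 1 p z = c * p z - f' * (q z * p z)" using E(3)[OF z] unfolding p_def q_def by linarith
    have v2: "pd 1 q z = e * p z + f * q z - f' * (q z * q z)" using E(4)[OF z] unfolding p_def q_def by linarith
    have v3: "pd 0 p z = a * p z - f' * (p z * p z)" using E(1)[OF z] unfolding p_def q_def by linarith
    have v4: "pd 0 q z = c * p z - f' * (p z * q z)" using E(2)[OF z] unfolding p_def q_def by linarith
    have "r * p z = 0"
      using h1 L R v1 v2 v3 v4 unfolding r_def by algebra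
    then show "p z = 0" using r by (simp add: r_def)
  qed
  have Q0: "pd 0 Q y = c * P y - a' * (P y * Q y) - c' * (P y * q y)" if y: "y \<in> U" for y
    using E(6)[OF y] p0[OF y] unfolding p_def q_def P_def Q_def by simp
  have Q1: "pd 1 Q y = e * P y + f * Q y - a' * (Q y * Q y) - c' * (Q y * q y) - c' * (Q y * q y) - e' * (q y * q y)" if y: "y \<in> U" for y
    using E(8)[OF y] p0[OF y] unfolding p_def q_def P_def Q_def by (simp add: algebra_simps)
  have P1: "pd 1 P y = c * P y - a' * (Q y * P y) - c' * (q y * P y)" if y: "y \<in> U" for y
    using E(7)[OF y] p0[OF y] unfolding p_def q_def P_def Q_def by (simp add: algebra_simps)
  have P0: "pd 0 P y = a * P y - a' * (P y * P y)" if y: "y \<in> U" for y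
    using E(5)[OF y] p0[OF y] unfolding p_def q_def P_def Q_def by (simp add: algebra_simps)
  have q0: "pd 0 q y = 0" if y: "y \<in> U" for y
    using E(2)[OF y] p0[OF y] unfolding p_def q_def P_def Q_def by simp
  have q1: "pd 1 q y = f * q y - f' * (q y * q y)" if y: "y \<in> U" for y
    using E(4)[OF y] p0[OF y] unfolding p_def q_def P_def Q_def by (simp add: algebra_simps)
  have K: "P z * (r' * (q z * q z) - r) = 0" if z: "z \<in> U" for z
  proof -
    have h1: "pd 1 (pd 0 Q) z = pd 0 (pd 1 Q) z" by (rule smooth_schwarz[OF U(1) sQ z])
    have "pd 1 (pd 0 Q) z = pd 1 (\<lambda>x. c * P x - a' * (P x * Q x) - c' * (P x * q x)) z"
      by (rule pd_local[OF U(1) z]) (rule Q0)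
    also have "\<dots> = c * pd 1 P z - a' * (pd 1 P z * Q z + P z * pd 1 Q z) - c' * (pd 1 P z * q z + P z * pd 1 q z)"
      using dd[OF z] by (simp add: pd_rules)
    finally have L: "pd 1 (pd 0 Q) z = c * pd 1 P z - a' * (pd 1 P z * Q z + P z * pd 1 Q z) - c' * (pd 1 P z * q z + P z * pd 1 q z)" .
    have "pd 0 (pd 1 Q) z = pd 0 (\<lambda>x. e * P x + f * Q x - a' * (Q x * Q x) - c' * (Q x * q x) - c' * (Q x * q x) - e' * (q x * q x)) z"
      by (rule pd_local[OF U(1) z]) (rule Q1)
    also have "\<dots> = e * pd 0 P z + f * pd 0 Q z - a' * (pd 0 Q z * Q z + Q z * pd 0 Q z)
         - c' * (pd 0 Q z * q z + Q z * pd 0 q z) - c' * (pd 0 Q z * q z + Q z * pd 0 q z) - e' * (pd 0 q z * q z + q z * pd 0 q z)"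
      using dd[OF z] by (simp add: pd_rules)
    finally have R: "pd 0 (pd 1 Q) z = e * pd 0 P z + f * pd 0 Q z - a' * (pd 0 Q z * Q z + Q z * pd 0 Q z)
         - c' * (pd 0 Q z * q z + Q z * pd 0 q z) - c' * (pd 0 Q z * q z + Q z * pd 0 q z) - e' * (pd 0 q z * q z + q z * pd 0 q z)" .
    show ?thesis
      unfolding r_def r'_def
      by (rule alg_K[OF _ Q0[OF z] Q1[OF z] P0[OF z] P1[OF z] q0[OF z] q1[OF z]]) (use h1 L R in simp)
  qed
  have "\<exists>x0\<in>U. P x0 \<noteq> 0"
  proof (rule ccontr)
    assume "\<not> (\<exists>x0\<in>U. P x0 \<noteq> 0)"
    then have Pz: "\<And>y. y \<in> U \<Longrightarrow> P y = 0" by blast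
    obtain x where x: "x \<in> U" using U(2) by blast
    obtain d where d: "d > 0" "ball x d \<subseteq> U" using U(1) x open_contains_ball by blast
    obtain x1 x2 where x12: "x = (x1, x2)" by (cases x)
    have seg: "(s, x2) \<in> U" if "x1 \<le> s" "s \<le> x1 + d/2" for s
    proof -
      have "dist x (s, x2) < d" using that d(1) by (simp add: x12 dist_Pair_Pair dist_real_def)
      then show ?thesis using d(2) by auto
    qed
    have const: "w (x1 + d/2, x2) = w (x1, x2)"
      if w1: "\<And>y. y \<in> U \<Longrightarrow> pdf 0 w y" and w2: "\<And>y. y \<in> U \<Longrightarrow> pd 0 w y = 0" for w
    proof -
      have der: "((\<lambda>s. w (s, x2)) has_real_derivative 0) (at s)" if "x1 \<le> s" "s \<le> x1 + d/2" for s
        using DERIV_line0[of w s x2] w1[OF seg[OF that]] w2[OF seg[OF that]] by (simp add: pdf_def)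
      have "continuous_on {x1..x1 + d/2} (\<lambda>s. w (s, x2))"
      proof (rule continuous_at_imp_continuous_on, rule ballI)
        fix s assume "s \<in> {x1..x1 + d/2}"
        then show "isCont (\<lambda>s. w (s, x2)) s" using der[of s] DERIV_isCont by auto
      qed
      then show ?thesis using d(1)
        by (intro DERIV_isconst2[where f="\<lambda>s. w (s, x2)"]) (auto intro: der)
    qed
    have "u (x1 + d/2, x2) = u (x1, x2)"
      by (rule const) (use su Pz in \<open>auto simp: P_def intro: smooth_pdf\<close>)
    moreover have "v (x1 + d/2, x2) = v (x1, x2)"
      by (rule const) (use sv p0 in \<open>auto simp: p_def intro: smooth_pdf\<close>)
    ultimately have "T (x1 + d/2, x2) = T (x1, x2)"
      by (simp add: u_def v_def coord_def prod_eq_iff)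
    then have "S (T (x1 + d/2, x2)) = S (T (x1, x2))" by simp
    then have "(x1 + d/2, x2) = (x1, x2)" using inj seg[of "x1 + d/2"] seg[of x1] d(1) by simp
    then show False using d(1) by simp
  qed
  then obtain x0 where x0: "x0 \<in> U" "P x0 \<noteq> 0" by blast
  have rq: "r' * (q x0 * q x0) = r" using K[OF x0(1)] x0(2) by simp
  have "0 = pd 1 (\<lambda>x. 0) x0" by (simp add: pd_const)
  also have "\<dots> = pd 1 (\<lambda>x. P x * (r' * (q x * q x) - r)) x0"
    by (rule pd_local[OF U(1) x0(1)]) (simp add: K)
  also have "\<dots> = pd 1 P x0 * (r' * (q x0 * q x0) - r) + P x0 * (r' * (pd 1 q x0 * q x0 + q x0 * pd 1 q x0))"
    using dd[OF x0(1)] by (simp add: pd_rules)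
  finally have A: "0 = pd 1 P x0 * (r' * (q x0 * q x0) - r) + P x0 * (r' * (pd 1 q x0 * q x0 + q x0 * pd 1 q x0))" .
  have rq0: "r' \<noteq> 0" "q x0 \<noteq> 0" using rq r by (auto simp: r_def)
  have B: "P x0 * (r' * (pd 1 q x0 * q x0 + q x0 * pd 1 q x0)) = 0" using A rq by simp
  have C: "pd 1 q x0 * q x0 + q x0 * pd 1 q x0 = 0" using B x0(2) rq0(1) by simp
  have "2 * q x0 * pd 1 q x0 = 0" using C by (simp add: algebra_simps)
  then have D: "pd 1 q x0 = 0" using rq0(2) by simp
  have "(f - f' * q x0) * q x0 = 0" using D q1[OF x0(1)] by (simp add: algebra_simps) (metis eq_commute)
  then have ff: "f = f' * q x0" using rq0(2) by simp
  have "0 < r' * r'" "0 < q x0 * q x0" using rq0 not_real_square_gt_zero by blast+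
  then have "0 < r' * r' * (q x0 * q x0)" by simp
  then show ?thesis unfolding r_def[symmetric] r'_def[symmetric]
    using rq ff by (auto simp: algebra_simps)
qed

lemma pdf_DERIV: "pdf i f z \<Longrightarrow> ((\<lambda>t. f (z + t *\<^sub>R unitv i)) has_real_derivative pd i f z) (at 0)"
  unfolding pdf_def by (rule pd_DERIV)

lemma pdfI: "((\<lambda>t. f (z + t *\<^sub>R unitv i)) has_real_derivative D) (at 0) \<Longrightarrow> pdf i f z"
  unfolding pdf_def by (auto simp: real_differentiable_def)

lemma pd_fst: "pd i fst z = fst (unitv i)"
  by (rule pd_eqI) (auto intro!: derivative_eq_intros)
lemma pd_snd: "pd i snd z = snd (unitv i)"
  by (rule pd_eqI) (auto intro!: derivative_eq_intros)
lemma pdf_fst: "pdf i fst z"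
  by (rule pdfI) (auto intro!: derivative_eq_intros)
lemma pdf_snd: "pdf i snd z"
  by (rule pdfI) (auto intro!: derivative_eq_intros)

lemma pd_minus: "pdf i f z \<Longrightarrow> pd i (\<lambda>x. - f x) z = - pd i f z"
  by (rule pd_eqI) (auto intro!: derivative_eq_intros pdf_DERIV)
lemma pdf_minus: "pdf i f z \<Longrightarrow> pdf i (\<lambda>x. - f x) z"
  by (rule pdfI) (auto intro!: derivative_eq_intros pdf_DERIV)
lemma pd_exp: "pdf i f z \<Longrightarrow> pd i (\<lambda>x. exp (f x)) z = exp (f z) * pd i f z"
  by (rule pd_eqI) (auto intro!: derivative_eq_intros pdf_DERIV)
lemma pdf_exp: "pdf i f z \<Longrightarrow> pdf i (\<lambda>x. exp (f x)) z"
  by (rule pdfI) (auto intro!: derivative_eq_intros pdf_DERIV)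
lemma pd_inverse: "pdf i f z \<Longrightarrow> f z \<noteq> 0 \<Longrightarrow> pd i (\<lambda>x. inverse (f x)) z = - (pd i f z * (inverse (f z) * inverse (f z)))"
  by (rule pd_eqI) (auto intro!: derivative_eq_intros pdf_DERIV)
lemma pdf_inverse: "pdf i f z \<Longrightarrow> f z \<noteq> 0 \<Longrightarrow> pdf i (\<lambda>x. inverse (f x)) z"
  by (rule pdfI) (auto intro!: derivative_eq_intros pdf_DERIV)
lemma pd_ln: "pdf i f z \<Longrightarrow> 0 < f z \<Longrightarrow> pd i (\<lambda>x. ln (f x)) z = pd i f z * inverse (f z)"
  by (rule pd_eqI) (auto intro!: derivative_eq_intros pdf_DERIV simp: field_simps)
lemma pdf_ln: "pdf i f z \<Longrightarrow> 0 < f z \<Longrightarrow> pdf i (\<lambda>x. ln (f x)) z"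
  by (rule pdfI) (auto intro!: derivative_eq_intros pdf_DERIV)

lemma Ck_cong: "open U \<Longrightarrow> (\<And>x. x \<in> U \<Longrightarrow> f x = g x) \<Longrightarrow> Ck_on k U f \<Longrightarrow> Ck_on k U g"
proof (induction k arbitrary: f g)
  case 0
  then show ?case using continuous_on_cong[of U U f g] by simp
next
  case (Suc k)
  have c: "continuous_on U g" using Suc.prems continuous_on_cong[of U U f g] by simp
  have d: "\<forall>x\<in>U. \<forall>i<2. pdiff i g x"
    using Suc.prems by (auto intro: pdiff_local[of U _ f g])
  have e: "\<forall>i<2. Ck_on k U (pd i g)"
  proof (intro allI impI)
    fix i :: nat assume "i < 2"
    then have fk: "Ck_on k U (pd i f)" using Suc.prems by simp
    show "Ck_on k U (pd i g)"
      by (rule Suc.IH[OF Suc.prems(1) _ fk]) (auto intro!: pd_local[OF Suc.prems(1)] Suc.prems(2))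
  qed
  show ?case using c d e by simp
qed

lemma Ck_const: "Ck_on k U (\<lambda>x. a)"
proof (induction k arbitrary: a)
  case 0 then show ?case by simp
next
  case (Suc k)
  have "pd i (\<lambda>x. a) = (\<lambda>x. 0)" for i by (rule ext) (rule pd_const)
  then show ?case using Suc by simp
qed

lemma Ck_fst: "Ck_on k U fst"
proof (cases k)
  case 0 then show ?thesis by (simp add: continuous_on_fst)
next
  case (Suc m)
  have "pd i fst = (\<lambda>x. fst (unitv i))" for i by (rule ext) (rule pd_fst)
  moreover have "pdiff i fst x" for i x using pdf_fst unfolding pdf_def .
  ultimately show ?thesis using Suc by (simp add: Ck_const continuous_on_fst)
qed

lemma Ck_snd: "Ck_on k U snd"
proof (cases k)
  case 0 then show ?thesis by (simp add: continuous_on_snd)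
next
  case (Suc m)
  have "pd i snd = (\<lambda>x. snd (unitv i))" for i by (rule ext) (rule pd_snd)
  moreover have "pdiff i snd x" for i x using pdf_snd unfolding pdf_def .
  ultimately show ?thesis using Suc by (simp add: Ck_const continuous_on_snd)
qed

lemma Ck_pdf: "Ck_on (Suc k) U f \<Longrightarrow> x \<in> U \<Longrightarrow> i < 2 \<Longrightarrow> pdf i f x"
  by (simp add: pdf_def)

lemma Ck_add: "open U \<Longrightarrow> Ck_on k U f \<Longrightarrow> Ck_on k U g \<Longrightarrow> Ck_on k U (\<lambda>x. f x + g x)"
proof (induction k arbitrary: f g)
  case 0 then show ?case by (simp add: continuous_on_add)
next
  case (Suc k)
  have e: "Ck_on k U (pd i (\<lambda>x. f x + g x))" if i: "i < 2" for i
  proof (rule Ck_cong[OF Suc.prems(1)])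
    show "Ck_on k U (\<lambda>x. pd i f x + pd i g x)" using Suc i by simp
    fix x assume "x \<in> U"
    then show "pd i f x + pd i g x = pd i (\<lambda>x. f x + g x) x"
      using Suc.prems i by (simp add: pd_add Ck_pdf del: Ck_on.simps)
  qed
  show ?case using Suc.prems e by (auto simp: continuous_on_add intro: differentiable_add)
qed

lemma Ck_mult: "open U \<Longrightarrow> Ck_on k U f \<Longrightarrow> Ck_on k U g \<Longrightarrow> Ck_on k U (\<lambda>x. f x * g x)"
proof (induction k arbitrary: f g)
  case 0 then show ?case by (simp add: continuous_on_mult)
next
  case (Suc k)
  have e: "Ck_on k U (pd i (\<lambda>x. f x * g x))" if i: "i < 2" for i
  proof (rule Ck_cong[OF Suc.prems(1)])
    have f: "Ck_on k U f" "Ck_on k U (pd i f)" and g: "Ck_on k U g" "Ck_on k U (pd i g)"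
      using Suc.prems i Ck_mono by auto
    show "Ck_on k U (\<lambda>x. pd i f x * g x + f x * pd i g x)"
      by (intro Ck_add Suc.IH Suc.prems(1) f g)
    fix x assume "x \<in> U"
    then show "pd i f x * g x + f x * pd i g x = pd i (\<lambda>x. f x * g x) x"
      using Suc.prems i by (simp add: pd_mult Ck_pdf del: Ck_on.simps)
  qed
  show ?case using Suc.prems e by (auto simp: continuous_on_mult intro: differentiable_mult)
qed

lemma Ck_minus: "open U \<Longrightarrow> Ck_on k U f \<Longrightarrow> Ck_on k U (\<lambda>x. - f x)"
  using Ck_mult[of U k "\<lambda>x. -1" f] by (simp add: Ck_const)

lemma Ck_exp: "open U \<Longrightarrow> Ck_on k U f \<Longrightarrow> Ck_on k U (\<lambda>x. exp (f x))"
proof (induction k arbitrary: f)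
  case 0 then show ?case by (simp add: continuous_on_exp)
next
  case (Suc k)
  have e: "Ck_on k U (pd i (\<lambda>x. exp (f x)))" if i: "i < 2" for i
  proof (rule Ck_cong[OF Suc.prems(1)])
    have f: "Ck_on k U f" "Ck_on k U (pd i f)"
      using Suc.prems i Ck_mono by auto
    show "Ck_on k U (\<lambda>x. exp (f x) * pd i f x)"
      by (intro Ck_mult Suc.IH Suc.prems(1) f)
    fix x assume "x \<in> U"
    then show "exp (f x) * pd i f x = pd i (\<lambda>x. exp (f x)) x"
      using Suc.prems i by (simp add: pd_exp Ck_pdf del: Ck_on.simps)
  qed
  have d: "pdiff i (\<lambda>x. exp (f x)) x" if "x \<in> U" "i < 2" for i x
    using pdf_exp[of i f x] Suc.prems that by (simp add: pdf_def)
  show ?case using Suc.prems e d by (auto simp: continuous_on_exp)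
qed

lemma Ck_inverse: "open U \<Longrightarrow> (\<And>x. x \<in> U \<Longrightarrow> f x \<noteq> 0) \<Longrightarrow> Ck_on k U f \<Longrightarrow> Ck_on k U (\<lambda>x. inverse (f x))"
proof (induction k arbitrary: f)
  case 0 then show ?case by (simp add: continuous_on_inverse)
next
  case (Suc k)
  have e: "Ck_on k U (pd i (\<lambda>x. inverse (f x)))" if i: "i < 2" for i
  proof (rule Ck_cong[OF Suc.prems(1)])
    have f: "Ck_on k U f" "Ck_on k U (pd i f)"
      using Suc.prems i Ck_mono by auto
    have fi: "Ck_on k U (\<lambda>x. inverse (f x))" by (rule Suc.IH[OF Suc.prems(1,2) f(1)])
    show "Ck_on k U (\<lambda>x. - (pd i f x * (inverse (f x) * inverse (f x))))"
      by (intro Ck_minus Ck_mult Suc.prems(1) f fi)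
    fix x assume "x \<in> U"
    then show "- (pd i f x * (inverse (f x) * inverse (f x))) = pd i (\<lambda>x. inverse (f x)) x"
      using Suc.prems i by (simp add: pd_inverse Ck_pdf del: Ck_on.simps)
  qed
  have d: "pdiff i (\<lambda>x. inverse (f x)) x" if "x \<in> U" "i < 2" for i x
    using pdf_inverse[of i f x] Suc.prems that by (simp add: pdf_def)
  show ?case using Suc.prems e d by (auto simp: continuous_on_inverse)
qed

lemma Ck_ln: "open U \<Longrightarrow> (\<And>x. x \<in> U \<Longrightarrow> f x > 0) \<Longrightarrow> Ck_on k U f \<Longrightarrow> Ck_on k U (\<lambda>x. ln (f x))"
proof (cases k)
  case 0
  assume a: "open U" "\<And>x. x \<in> U \<Longrightarrow> f x > 0" "Ck_on k U f"
  have nz: "\<And>x. x \<in> U \<Longrightarrow> f x \<noteq> 0" using a(2) by (metis less_irrefl)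
  then show ?thesis using 0 a(3) by (auto intro!: continuous_on_ln)
next
  case (Suc m)
  assume a: "open U" "\<And>x. x \<in> U \<Longrightarrow> f x > 0" "Ck_on k U f"
  have e: "Ck_on m U (pd i (\<lambda>x. ln (f x)))" if i: "i < 2" for i
  proof (rule Ck_cong[OF a(1)])
    have f: "Ck_on m U f" "Ck_on m U (pd i f)"
      using a Suc i Ck_mono by auto
    have fi: "Ck_on m U (\<lambda>x. inverse (f x))"
      by (rule Ck_inverse[OF a(1) _ f(1)]) (use a(2) in force)
    show "Ck_on m U (\<lambda>x. pd i f x * inverse (f x))"
      by (intro Ck_mult a(1) f fi)
    fix x assume "x \<in> U"
    then show "pd i f x * inverse (f x) = pd i (\<lambda>x. ln (f x)) x"
      using a Suc i by (simp add: pd_ln Ck_pdf del: Ck_on.simps)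
  qed
  have d: "pdiff i (\<lambda>x. ln (f x)) x" if "x \<in> U" "i < 2" for i x
    using pdf_ln[of i f x] a Suc that by (simp add: pdf_def)
  have c: "continuous_on U (\<lambda>x. ln (f x))"
  proof -
    have nz: "\<And>x. x \<in> U \<Longrightarrow> f x \<noteq> 0" using a(2) by (metis less_irrefl)
    then show ?thesis using a(3) Suc by (auto intro!: continuous_on_ln)
  qed
  show ?thesis using Suc e d c by simp
qed

lemma sm_const: "smooth_fun_on U (\<lambda>x. a)" by (simp add: smooth_fun_on_def Ck_const)
lemma sm_fst: "smooth_fun_on U fst" by (simp add: smooth_fun_on_def Ck_fst)
lemma sm_snd: "smooth_fun_on U snd" by (simp add: smooth_fun_on_def Ck_snd)
lemma sm_add: "open U \<Longrightarrow> smooth_fun_on U f \<Longrightarrow> smooth_fun_on U g \<Longrightarrow> smooth_fun_on U (\<lambda>x. f x + g x)"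
  by (simp add: smooth_fun_on_def Ck_add)
lemma sm_mult: "open U \<Longrightarrow> smooth_fun_on U f \<Longrightarrow> smooth_fun_on U g \<Longrightarrow> smooth_fun_on U (\<lambda>x. f x * g x)"
  by (simp add: smooth_fun_on_def Ck_mult)
lemma sm_minus: "open U \<Longrightarrow> smooth_fun_on U f \<Longrightarrow> smooth_fun_on U (\<lambda>x. - f x)"
  by (simp add: smooth_fun_on_def Ck_minus)
lemma sm_diff: "open U \<Longrightarrow> smooth_fun_on U f \<Longrightarrow> smooth_fun_on U g \<Longrightarrow> smooth_fun_on U (\<lambda>x. f x - g x)"
  using sm_add[of U f "\<lambda>x. - g x"] sm_minus[of U g] by simp
lemma sm_exp: "open U \<Longrightarrow> smooth_fun_on U f \<Longrightarrow> smooth_fun_on U (\<lambda>x. exp (f x))"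
  by (simp add: smooth_fun_on_def Ck_exp)
lemma sm_ln: "open U \<Longrightarrow> (\<And>x. x \<in> U \<Longrightarrow> f x > 0) \<Longrightarrow> smooth_fun_on U f \<Longrightarrow> smooth_fun_on U (\<lambda>x. ln (f x))"
  by (simp add: smooth_fun_on_def Ck_ln)

lemma sm_map: "smooth_fun_on U A \<Longrightarrow> smooth_fun_on U B \<Longrightarrow> smooth_map_on U (\<lambda>p. (A p, B p))"
  unfolding smooth_map_on_def by (auto simp: coord_def less_2_cases_iff)

lemma pb_intro:
  fixes u v :: "real \<times> real \<Rightarrow> real"
  assumes uv: "u = (\<lambda>p. coord 0 (T p))" "v = (\<lambda>p. coord 1 (T p))"
  assumes e1: "\<And>x. x \<in> U \<Longrightarrow> pd 0 (pd 0 v) x + f' * (pd 0 v x * pd 0 v x) = a * pd 0 v x"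
    and e2: "\<And>x. x \<in> U \<Longrightarrow> pd 0 (pd 1 v) x + f' * (pd 0 v x * pd 1 v x) = c * pd 0 v x"
    and e3: "\<And>x. x \<in> U \<Longrightarrow> pd 1 (pd 0 v) x + f' * (pd 1 v x * pd 0 v x) = c * pd 0 v x"
    and e4: "\<And>x. x \<in> U \<Longrightarrow> pd 1 (pd 1 v) x + f' * (pd 1 v x * pd 1 v x) = e * pd 0 v x + f * pd 1 v x"
    and e5: "\<And>x. x \<in> U \<Longrightarrow> pd 0 (pd 0 u) x + a' * (pd 0 u x * pd 0 u x) + c' * (pd 0 u x * pd 0 v x + pd 0 v x * pd 0 u x) + e' * (pd 0 v x * pd 0 v x) = a * pd 0 u x"
    and e6: "\<And>x. x \<in> U \<Longrightarrow> pd 0 (pd 1 u) x + a' * (pd 0 u x * pd 1 u x) + c' * (pd 0 u x * pd 1 v x + pd 0 v x * pd 1 u x) + e' * (pd 0 v x * pd 1 v x) = c * pd 0 u x"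
    and e7: "\<And>x. x \<in> U \<Longrightarrow> pd 1 (pd 0 u) x + a' * (pd 1 u x * pd 0 u x) + c' * (pd 1 u x * pd 0 v x + pd 1 v x * pd 0 u x) + e' * (pd 1 v x * pd 0 v x) = c * pd 0 u x"
    and e8: "\<And>x. x \<in> U \<Longrightarrow> pd 1 (pd 1 u) x + a' * (pd 1 u x * pd 1 u x) + c' * (pd 1 u x * pd 1 v x + pd 1 v x * pd 1 u x) + e' * (pd 1 v x * pd 1 v x) = e * pd 0 u x + f * pd 1 u x"
  shows "pullback_eq U T (Gam a 0 c 0 e f) (Gam a' 0 c' 0 e' f')"
  unfolding pullback_eq_def
proof (intro ballI allI impI)
  fix x i j k assume x: "x \<in> U" and ijk: "i < (2::nat)" "j < (2::nat)" "k < (2::nat)"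
  note E = e1[OF x] e2[OF x] e3[OF x] e4[OF x] e5[OF x] e6[OF x] e7[OF x] e8[OF x]
  show "pd i (pd j (\<lambda>p. coord k (T p))) x +
          (\<Sum>a<2. \<Sum>b<2. Gam a' 0 c' 0 e' f' a b k * pd i (\<lambda>p. coord a (T p)) x * pd j (\<lambda>p. coord b (T p)) x) =
          (\<Sum>l<2. pd l (\<lambda>p. coord k (T p)) x * Gam a 0 c 0 e f i j l)"
    using ijk E unfolding uv by (auto simp: less_2_cases_iff sum2 Gam_def algebra_simps)
qed

lemma ae_intro2:
  assumes "open U" "U \<noteq> {}" "open V" "\<And>x. x \<in> U \<Longrightarrow> T x \<in> V" "\<And>y. y \<in> V \<Longrightarrow> S y \<in> U"
    "\<And>x. x \<in> U \<Longrightarrow> S (T x) = x" "\<And>y. y \<in> V \<Longrightarrow> T (S y) = y"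
    "smooth_map_on U T" "smooth_map_on V S" "pullback_eq U T G G'"
  shows "affinely_equivalent G G'"
proof -
  have "T ` U = V"
  proof
    show "T ` U \<subseteq> V" using assms(4) by auto
    show "V \<subseteq> T ` U"
    proof
      fix y assume "y \<in> V"
      then show "y \<in> T ` U" using assms(5,7) by (metis image_eqI)
    qed
  qed
  moreover have "S ` V = U"
  proof
    show "S ` V \<subseteq> U" using assms(5) by auto
    show "U \<subseteq> S ` V"
    proof
      fix x assume "x \<in> U"
      then show "x \<in> S ` V" using assms(4,6) by (metis image_eqI)
    qed
  qed
  ultimately show ?thesis unfolding affinely_equivalent_def
    by (intro exI[of _ U] exI[of _ V] exI[of _ T] exI[of _ S] conjI; use assms in simp)
qed

lemma pb_from_derivs:
  fixes u v Ux Uy Vx Vy :: "real \<times> real \<Rightarrow> real"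
  assumes U: "open U"
  assumes uv: "u = (\<lambda>p. coord 0 (T p))" "v = (\<lambda>p. coord 1 (T p))"
  assumes d: "\<And>z. z \<in> U \<Longrightarrow> pd 0 u z = Ux z \<and> pd 1 u z = Uy z \<and> pd 0 v z = Vx z \<and> pd 1 v z = Vy z"
  assumes e1: "\<And>x. x \<in> U \<Longrightarrow> pd 0 Vx x + f' * (Vx x * Vx x) = a * Vx x"
    and e2: "\<And>x. x \<in> U \<Longrightarrow> pd 0 Vy x + f' * (Vx x * Vy x) = c * Vx x"
    and e3: "\<And>x. x \<in> U \<Longrightarrow> pd 1 Vx x + f' * (Vy x * Vx x) = c * Vx x"
    and e4: "\<And>x. x \<in> U \<Longrightarrow> pd 1 Vy x + f' * (Vy x * Vy x) = e * Vx x + f * Vy x"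
    and e5: "\<And>x. x \<in> U \<Longrightarrow> pd 0 Ux x + a' * (Ux x * Ux x) + c' * (Ux x * Vx x + Vx x * Ux x) + e' * (Vx x * Vx x) = a * Ux x"
    and e6: "\<And>x. x \<in> U \<Longrightarrow> pd 0 Uy x + a' * (Ux x * Uy x) + c' * (Ux x * Vy x + Vx x * Uy x) + e' * (Vx x * Vy x) = c * Ux x"
    and e7: "\<And>x. x \<in> U \<Longrightarrow> pd 1 Ux x + a' * (Uy x * Ux x) + c' * (Uy x * Vx x + Vy x * Ux x) + e' * (Vy x * Vx x) = c * Ux x"
    and e8: "\<And>x. x \<in> U \<Longrightarrow> pd 1 Uy x + a' * (Uy x * Uy x) + c' * (Uy x * Vy x + Vy x * Uy x) + e' * (Vy x * Vy x) = e * Ux x + f * Uy x"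
  shows "pullback_eq U T (Gam a 0 c 0 e f) (Gam a' 0 c' 0 e' f')"
proof (rule pb_intro[OF uv])
  have l: "pd i (pd 0 u) x = pd i Ux x" "pd i (pd 1 u) x = pd i Uy x"
          "pd i (pd 0 v) x = pd i Vx x" "pd i (pd 1 v) x = pd i Vy x" if "x \<in> U" for i x
    using that d by (auto intro!: pd_local[OF U])
  fix x assume x: "x \<in> U"
  note D = d[OF x] l[OF x]
  show "pd 0 (pd 0 v) x + f' * (pd 0 v x * pd 0 v x) = a * pd 0 v x" using e1[OF x] D by simp
  show "pd 0 (pd 1 v) x + f' * (pd 0 v x * pd 1 v x) = c * pd 0 v x" using e2[OF x] D by simp
  show "pd 1 (pd 0 v) x + f' * (pd 1 v x * pd 0 v x) = c * pd 0 v x" using e3[OF x] D by simp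
  show "pd 1 (pd 1 v) x + f' * (pd 1 v x * pd 1 v x) = e * pd 0 v x + f * pd 1 v x" using e4[OF x] D by simp
  show "pd 0 (pd 0 u) x + a' * (pd 0 u x * pd 0 u x) + c' * (pd 0 u x * pd 0 v x + pd 0 v x * pd 0 u x) + e' * (pd 0 v x * pd 0 v x) = a * pd 0 u x" using e5[OF x] D by simp
  show "pd 0 (pd 1 u) x + a' * (pd 0 u x * pd 1 u x) + c' * (pd 0 u x * pd 1 v x + pd 0 v x * pd 1 u x) + e' * (pd 0 v x * pd 1 v x) = c * pd 0 u x" using e6[OF x] D by simp
  show "pd 1 (pd 0 u) x + a' * (pd 1 u x * pd 0 u x) + c' * (pd 1 u x * pd 0 v x + pd 1 v x * pd 0 u x) + e' * (pd 1 v x * pd 0 v x) = c * pd 0 u x" using e7[OF x] D by simp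
  show "pd 1 (pd 1 u) x + a' * (pd 1 u x * pd 1 u x) + c' * (pd 1 u x * pd 1 v x + pd 1 v x * pd 1 u x) + e' * (pd 1 v x * pd 1 v x) = e * pd 0 u x + f * pd 1 u x" using e8[OF x] D by simp
qed

lemmas pds = pd_rules pd_fst pd_snd pdf_fst pdf_snd pd_minus pdf_minus pd_exp pdf_exp pd_ln pdf_ln pd_inverse pdf_inverse unitv_def

lemma ae_Pk:
  fixes k a c e f a' c' e' f' :: real
  assumes "f' = f" "a' = a" "k * a = 0" "c' = c" "2 * k + e' = e" "k * (2 * c - f) = 0"
  shows "affinely_equivalent (Gam a 0 c 0 e f) (Gam a' 0 c' 0 e' f')"
proof (rule ae_intro2[where U=UNIV and V=UNIV and T="\<lambda>p. (fst p + k * (snd p * snd p), snd p)"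
      and S="\<lambda>p. (fst p - k * (snd p * snd p), snd p)"])
  show "smooth_map_on UNIV (\<lambda>p. (fst p + k * (snd p * snd p), snd p))"
    by (intro sm_map sm_add sm_mult sm_const sm_fst sm_snd open_UNIV)
  show "smooth_map_on UNIV (\<lambda>p. (fst p - k * (snd p * snd p), snd p))"
    by (intro sm_map sm_diff sm_mult sm_const sm_fst sm_snd open_UNIV)
  show "pullback_eq UNIV (\<lambda>p. (fst p + k * (snd p * snd p), snd p)) (Gam a 0 c 0 e f) (Gam a' 0 c' 0 e' f')"
  proof (rule pb_from_derivs[where u="\<lambda>p. fst p + k * (snd p * snd p)" and v=snd
        and Ux="\<lambda>p. 1" and Uy="\<lambda>p. 2 * k * snd p" and Vx="\<lambda>p. 0" and Vy="\<lambda>p. 1"])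
    fix z :: "real \<times> real"
    show "pd 0 (\<lambda>p. fst p + k * (snd p * snd p)) z = 1 \<and> pd 1 (\<lambda>p. fst p + k * (snd p * snd p)) z = 2 * k * snd z \<and>
          pd 0 snd z = 0 \<and> pd 1 snd z = 1"
      by (simp add: pds)
  qed (use assms in \<open>auto simp: pds coord_def algebra_simps\<close>)
qed auto


lemma pd_inverse_pos: "pdf i f z \<Longrightarrow> 0 < f z \<Longrightarrow> pd i (\<lambda>x. inverse (f x)) z = - (pd i f z * (inverse (f z) * inverse (f z)))"
  by (rule pd_inverse) auto
lemma pdf_inverse_pos: "pdf i f z \<Longrightarrow> 0 < f z \<Longrightarrow> pdf i (\<lambda>x. inverse (f x)) z"
  by (rule pdf_inverse) auto

lemmas pds2 = pds pd_inverse_pos pdf_inverse_pos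

lemma ae_R:
  fixes a c e f a' c' e' f' :: real
  assumes "f' = - f" "a' = a" "c' = - c" "e' = e"
  shows "affinely_equivalent (Gam a 0 c 0 e f) (Gam a' 0 c' 0 e' f')"
proof (rule ae_intro2[where U=UNIV and V=UNIV and T="\<lambda>p. (fst p, - snd p)"
      and S="\<lambda>p. (fst p, - snd p)"])
  show "smooth_map_on UNIV (\<lambda>p. (fst p, - snd p))"
    by (intro sm_map sm_minus sm_fst sm_snd open_UNIV)
  show "smooth_map_on UNIV (\<lambda>p. (fst p, - snd p))"
    by (intro sm_map sm_minus sm_fst sm_snd open_UNIV)
  show "pullback_eq UNIV (\<lambda>p. (fst p, - snd p)) (Gam a 0 c 0 e f) (Gam a' 0 c' 0 e' f')"
  proof (rule pb_from_derivs[where u="fst" and v="\<lambda>p. - snd p"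
        and Ux="\<lambda>p. 1" and Uy="\<lambda>p. 0" and Vx="\<lambda>p. 0" and Vy="\<lambda>p. -1"])
    fix z :: "real \<times> real"
    show "pd 0 fst z = 1 \<and> pd 1 fst z = 0 \<and> pd 0 (\<lambda>p. - snd p) z = 0 \<and> pd 1 (\<lambda>p. - snd p) z = -1"
      by (simp add: pds)
  qed (use assms in \<open>auto simp: pds coord_def algebra_simps\<close>)
qed auto

lemma ae_L:
  fixes a c e f a' c' e' f' :: real
  assumes "f' = - f" "a' = a" "c = a - c'" "e = a - 2 * c' + e' - f"
  shows "affinely_equivalent (Gam a 0 c 0 e f) (Gam a' 0 c' 0 e' f')"
proof (rule ae_intro2[where U=UNIV and V=UNIV and T="\<lambda>p. (fst p + snd p, - snd p)"
      and S="\<lambda>p. (fst p + snd p, - snd p)"])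
  show "smooth_map_on UNIV (\<lambda>p. (fst p + snd p, - snd p))"
    by (intro sm_map sm_add sm_minus sm_fst sm_snd open_UNIV)
  show "smooth_map_on UNIV (\<lambda>p. (fst p + snd p, - snd p))"
    by (intro sm_map sm_add sm_minus sm_fst sm_snd open_UNIV)
  show "pullback_eq UNIV (\<lambda>p. (fst p + snd p, - snd p)) (Gam a 0 c 0 e f) (Gam a' 0 c' 0 e' f')"
  proof (rule pb_from_derivs[where u="\<lambda>p. fst p + snd p" and v="\<lambda>p. - snd p"
        and Ux="\<lambda>p. 1" and Uy="\<lambda>p. 1" and Vx="\<lambda>p. 0" and Vy="\<lambda>p. -1"])
    fix z :: "real \<times> real"
    show "pd 0 (\<lambda>p. fst p + snd p) z = 1 \<and> pd 1 (\<lambda>p. fst p + snd p) z = 1 \<and> pd 0 (\<lambda>p. - snd p) z = 0 \<and> pd 1 (\<lambda>p. - snd p) z = -1"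
      by (simp add: pds)
  qed (use assms in \<open>auto simp: pds coord_def algebra_simps\<close>)
qed auto

lemma ae_M:
  fixes a c e f a' c' e' f' :: real
  assumes "a = 0" "a' = 0" "e = 0" "e' = 0" "c = - 1 - c'" "f = - 1 - 2 * c'" "f' = - f"
  shows "affinely_equivalent (Gam a 0 c 0 e f) (Gam a' 0 c' 0 e' f')"
proof (rule ae_intro2[where U=UNIV and V=UNIV and T="\<lambda>p. (fst p * exp (- snd p), - snd p)"
      and S="\<lambda>p. (fst p * exp (- snd p), - snd p)"])
  show "smooth_map_on UNIV (\<lambda>p. (fst p * exp (- snd p), - snd p))"
    by (intro sm_map sm_mult sm_exp sm_minus sm_fst sm_snd open_UNIV)
  show "smooth_map_on UNIV (\<lambda>p. (fst p * exp (- snd p), - snd p))"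
    by (intro sm_map sm_mult sm_exp sm_minus sm_fst sm_snd open_UNIV)
  show "pullback_eq UNIV (\<lambda>p. (fst p * exp (- snd p), - snd p)) (Gam a 0 c 0 e f) (Gam a' 0 c' 0 e' f')"
  proof (rule pb_from_derivs[where u="\<lambda>p. fst p * exp (- snd p)" and v="\<lambda>p. - snd p"
        and Ux="\<lambda>p. exp (- snd p)" and Uy="\<lambda>p. - (fst p * exp (- snd p))" and Vx="\<lambda>p. 0" and Vy="\<lambda>p. -1"])
    fix z :: "real \<times> real"
    show "pd 0 (\<lambda>p. fst p * exp (- snd p)) z = exp (- snd z) \<and> pd 1 (\<lambda>p. fst p * exp (- snd p)) z = - (fst z * exp (- snd z))
       \<and> pd 0 (\<lambda>p. - snd p) z = 0 \<and> pd 1 (\<lambda>p. - snd p) z = -1"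
      by (simp add: pds)
  qed (auto simp: assms pds coord_def algebra_simps)
qed (auto simp: mult_exp_exp)

lemma ae_E:
  fixes k a c e f a' c' e' f' :: real
  assumes "f' = f" "a = -1" "a' = 0" "c' = c" "e = 0" "e' = - 2 * k" "k * (2 * c - f) = 0"
  shows "affinely_equivalent (Gam a 0 c 0 e f) (Gam a' 0 c' 0 e' f')"
proof (rule ae_intro2[where U=UNIV and V="{p. 0 < fst p - k * (snd p * snd p)}"
      and T="\<lambda>p. (exp (- fst p) + k * (snd p * snd p), snd p)"
      and S="\<lambda>p. (- ln (fst p - k * (snd p * snd p)), snd p)"])
  show "open {p::real\<times>real. 0 < fst p - k * (snd p * snd p)}"
    by (intro open_Collect_less continuous_intros)
  show "smooth_map_on UNIV (\<lambda>p. (exp (- fst p) + k * (snd p * snd p), snd p))"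
    by (intro sm_map sm_add sm_mult sm_exp sm_minus sm_const sm_fst sm_snd open_UNIV)
  show "smooth_map_on {p. 0 < fst p - k * (snd p * snd p)} (\<lambda>p. (- ln (fst p - k * (snd p * snd p)), snd p))"
    by (intro sm_map sm_minus sm_ln sm_diff sm_mult sm_const sm_fst sm_snd open_Collect_less continuous_intros) auto
  show "pullback_eq UNIV (\<lambda>p. (exp (- fst p) + k * (snd p * snd p), snd p)) (Gam a 0 c 0 e f) (Gam a' 0 c' 0 e' f')"
  proof (rule pb_from_derivs[where u="\<lambda>p. exp (- fst p) + k * (snd p * snd p)" and v="snd"
        and Ux="\<lambda>p. - exp (- fst p)" and Uy="\<lambda>p. 2 * k * snd p" and Vx="\<lambda>p. 0" and Vy="\<lambda>p. 1"])
    fix z :: "real \<times> real"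
    show "pd 0 (\<lambda>p. exp (- fst p) + k * (snd p * snd p)) z = - exp (- fst z) \<and> pd 1 (\<lambda>p. exp (- fst p) + k * (snd p * snd p)) z = 2 * k * snd z
       \<and> pd 0 snd z = 0 \<and> pd 1 snd z = 1"
      by (simp add: pds)
  qed (use assms in \<open>auto simp: pds coord_def algebra_simps\<close>)
qed auto

lemma ae_Lg:
  fixes k a c e f a' c' e' f' :: real
  assumes "f' = f" "a = 0" "a' = -1" "c' = c" "e' = 0" "e = - 2 * k" "k * (2 * c - f) = 0"
  shows "affinely_equivalent (Gam a 0 c 0 e f) (Gam a' 0 c' 0 e' f')"
proof (rule ae_intro2[where V=UNIV and U="{p. 0 < fst p - k * (snd p * snd p)}"
      and S="\<lambda>p. (exp (- fst p) + k * (snd p * snd p), snd p)"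
      and T="\<lambda>p. (- ln (fst p - k * (snd p * snd p)), snd p)"])
  show "open {p::real\<times>real. 0 < fst p - k * (snd p * snd p)}"
    by (intro open_Collect_less continuous_intros)
  show "{p::real\<times>real. 0 < fst p - k * (snd p * snd p)} \<noteq> {}"
  proof -
    have "(1::real, 0::real) \<in> {p::real\<times>real. 0 < fst p - k * (snd p * snd p)}" by simp
    then show ?thesis by blast
  qed
  show "smooth_map_on UNIV (\<lambda>p. (exp (- fst p) + k * (snd p * snd p), snd p))"
    by (intro sm_map sm_add sm_mult sm_exp sm_minus sm_const sm_fst sm_snd open_UNIV)
  show "smooth_map_on {p. 0 < fst p - k * (snd p * snd p)} (\<lambda>p. (- ln (fst p - k * (snd p * snd p)), snd p))"
    by (intro sm_map sm_minus sm_ln sm_diff sm_mult sm_const sm_fst sm_snd open_Collect_less continuous_intros) auto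
  show "pullback_eq {p. 0 < fst p - k * (snd p * snd p)} (\<lambda>p. (- ln (fst p - k * (snd p * snd p)), snd p)) (Gam a 0 c 0 e f) (Gam a' 0 c' 0 e' f')"
  proof (rule pb_from_derivs[where u="\<lambda>p. - ln (fst p - k * (snd p * snd p))" and v="snd"
        and Ux="\<lambda>p. - inverse (fst p - k * (snd p * snd p))" and Uy="\<lambda>p. 2 * k * snd p * inverse (fst p - k * (snd p * snd p))"
        and Vx="\<lambda>p. 0" and Vy="\<lambda>p. 1"])
    show "open {p::real\<times>real. 0 < fst p - k * (snd p * snd p)}"
      by (intro open_Collect_less continuous_intros)
    fix z :: "real \<times> real" assume "z \<in> {p. 0 < fst p - k * (snd p * snd p)}"
    then show "pd 0 (\<lambda>p. - ln (fst p - k * (snd p * snd p))) z = - inverse (fst z - k * (snd z * snd z))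
       \<and> pd 1 (\<lambda>p. - ln (fst p - k * (snd p * snd p))) z = 2 * k * snd z * inverse (fst z - k * (snd z * snd z))
       \<and> pd 0 snd z = 0 \<and> pd 1 snd z = 1"
      by (simp add: pds2 algebra_simps)
  qed (use assms in \<open>auto simp: pds2 coord_def algebra_simps\<close>)
qed auto

lemma ae_F:
  fixes a c e f a' c' e' f' :: real
  assumes "a = -1" "a' = 0" "e' = 0" "c = - 1 - c'" "f = - 1 - 2 * c' - e" "f' = - f"
  shows "affinely_equivalent (Gam a 0 c 0 e f) (Gam a' 0 c' 0 e' f')"
proof (rule ae_intro2[where U=UNIV and V="{p. 0 < fst p}"
      and T="\<lambda>p. (exp (- fst p - snd p), - snd p)"
      and S="\<lambda>p. (snd p - ln (fst p), - snd p)"])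
  show "open {p::real\<times>real. 0 < fst p}"
    by (intro open_Collect_less continuous_intros)
  show "smooth_map_on UNIV (\<lambda>p. (exp (- fst p - snd p), - snd p))"
    by (intro sm_map sm_diff sm_exp sm_minus sm_fst sm_snd open_UNIV)
  show "smooth_map_on {p. 0 < fst p} (\<lambda>p. (snd p - ln (fst p), - snd p))"
    by (intro sm_map sm_minus sm_ln sm_diff sm_fst sm_snd open_Collect_less continuous_intros) auto
  show "pullback_eq UNIV (\<lambda>p. (exp (- fst p - snd p), - snd p)) (Gam a 0 c 0 e f) (Gam a' 0 c' 0 e' f')"
  proof (rule pb_from_derivs[where u="\<lambda>p. exp (- fst p - snd p)" and v="\<lambda>p. - snd p"
        and Ux="\<lambda>p. - exp (- fst p - snd p)" and Uy="\<lambda>p. - exp (- fst p - snd p)" and Vx="\<lambda>p. 0" and Vy="\<lambda>p. -1"])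
    fix z :: "real \<times> real"
    show "pd 0 (\<lambda>p. exp (- fst p - snd p)) z = - exp (- fst z - snd z) \<and> pd 1 (\<lambda>p. exp (- fst p - snd p)) z = - exp (- fst z - snd z)
       \<and> pd 0 (\<lambda>p. - snd p) z = 0 \<and> pd 1 (\<lambda>p. - snd p) z = -1"
      by (simp add: pds)
  qed (auto simp: assms pds coord_def algebra_simps)
qed (auto simp: algebra_simps)

lemma ae_H:
  fixes a c e f a' c' e' f' :: real
  assumes "a = 0" "a' = -1" "e = 0" "c = - 1 - c'" "f = - 1 - 2 * c' + e'" "f' = - f"
  shows "affinely_equivalent (Gam a 0 c 0 e f) (Gam a' 0 c' 0 e' f')"
proof (rule ae_intro2[where V=UNIV and U="{p. 0 < fst p}"
      and S="\<lambda>p. (exp (- fst p - snd p), - snd p)"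
      and T="\<lambda>p. (snd p - ln (fst p), - snd p)"])
  show "open {p::real\<times>real. 0 < fst p}"
    by (intro open_Collect_less continuous_intros)
  show "{p::real\<times>real. 0 < fst p} \<noteq> {}"
  proof -
    have "(1::real, 0::real) \<in> {p::real\<times>real. 0 < fst p}" by simp
    then show ?thesis by blast
  qed
  show "smooth_map_on UNIV (\<lambda>p. (exp (- fst p - snd p), - snd p))"
    by (intro sm_map sm_diff sm_exp sm_minus sm_fst sm_snd open_UNIV)
  show "smooth_map_on {p. 0 < fst p} (\<lambda>p. (snd p - ln (fst p), - snd p))"
    by (intro sm_map sm_minus sm_ln sm_diff sm_fst sm_snd open_Collect_less continuous_intros) auto
  show "pullback_eq {p. 0 < fst p} (\<lambda>p. (snd p - ln (fst p), - snd p)) (Gam a 0 c 0 e f) (Gam a' 0 c' 0 e' f')"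
  proof (rule pb_from_derivs[where u="\<lambda>p. snd p - ln (fst p)" and v="\<lambda>p. - snd p"
        and Ux="\<lambda>p. - inverse (fst p)" and Uy="\<lambda>p. 1" and Vx="\<lambda>p. 0" and Vy="\<lambda>p. -1"])
    show "open {p::real\<times>real. 0 < fst p}"
      by (intro open_Collect_less continuous_intros)
    fix z :: "real \<times> real" assume "z \<in> {p. 0 < fst p}"
    then show "pd 0 (\<lambda>p. snd p - ln (fst p)) z = - inverse (fst z) \<and> pd 1 (\<lambda>p. snd p - ln (fst p)) z = 1
       \<and> pd 0 (\<lambda>p. - snd p) z = 0 \<and> pd 1 (\<lambda>p. - snd p) z = -1"
      by (simp add: pds2)
  qed (auto simp: assms pds2 coord_def algebra_simps)
qed (auto simp: algebra_simps)

definition Rv :: "nat \<Rightarrow> real \<Rightarrow> real" where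
  "Rv i c = (if i = 1 \<or> i = 4 then 1 else if i = 2 \<or> i = 3 then c * c + c else 1 + c * c)"
definition Fv :: "nat \<Rightarrow> real \<Rightarrow> real" where
  "Fv i c = (if i = 1 \<or> i = 4 then 2 else if i = 2 \<or> i = 3 then 1 + 2 * c else 2 * c)"

lemma RF14: "i \<in> {1,4} \<Longrightarrow> Rv i c = 1 \<and> Fv i c = 2" by (auto simp: Rv_def Fv_def)
lemma RF23: "i \<in> {2,3} \<Longrightarrow> Rv i c = c * c + c \<and> Fv i c = 1 + 2 * c" by (auto simp: Rv_def Fv_def)
lemma RF5: "i = 5 \<Longrightarrow> Rv i c = 1 + c * c \<and> Fv i c = 2 * c" by (auto simp: Rv_def Fv_def)

lemma alg_a: fixes x :: real shows "2 * 2 * (x * x + x) = (1 + 2 * x) * (1 + 2 * x) * 1 \<Longrightarrow> False"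
proof -
  assume h: "2 * 2 * (x * x + x) = (1 + 2 * x) * (1 + 2 * x) * 1"
  have "(1 + 2 * x) * (1 + 2 * x) * 1 - 2 * 2 * (x * x + x) = 1" by algebra
  then show False using h by simp
qed

lemma alg_b: fixes x :: real shows "2 * 2 * (1 + x * x) = 2 * x * (2 * x) * 1 \<Longrightarrow> False"
proof -
  assume h: "2 * 2 * (1 + x * x) = 2 * x * (2 * x) * 1"
  have "2 * 2 * (1 + x * x) - 2 * x * (2 * x) * 1 = 4" by (simp add: algebra_simps)
  then show False using h by simp
qed

lemma alg_c: fixes c d :: real
  shows "(1 + 2 * c) * (1 + 2 * c) * (d * d + d) = (1 + 2 * d) * (1 + 2 * d) * (c * c + c) \<Longrightarrow> c = d \<or> c = -1 - d"
proof -
  assume h: "(1 + 2 * c) * (1 + 2 * c) * (d * d + d) = (1 + 2 * d) * (1 + 2 * d) * (c * c + c)"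
  have "(1 + 2 * c) * (1 + 2 * c) * (d * d + d) - (1 + 2 * d) * (1 + 2 * d) * (c * c + c) = (d - c) * (d + c + 1)" by algebra
  then have "(d - c) * (d + c + 1) = 0" using h by simp
  then have "d - c = 0 \<or> d + c + 1 = 0" by (simp only: mult_eq_0_iff)
  then show ?thesis by arith
qed

lemma alg_d: fixes c d :: real
  shows "(1 + 2 * c) * (1 + 2 * c) * (1 + d * d) = 2 * d * (2 * d) * (c * c + c) \<Longrightarrow> 0 < (c * c + c) * (1 + d * d) \<Longrightarrow> False"
proof -
  assume h: "(1 + 2 * c) * (1 + 2 * c) * (1 + d * d) = 2 * d * (2 * d) * (c * c + c)" and p: "0 < (c * c + c) * (1 + d * d)"
  have "(1 + 2 * c) * (1 + 2 * c) * (1 + d * d) - 2 * d * (2 * d) * (c * c + c) = 4 * (c * c + c) + 1 + d * d" by algebra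
  then have e: "4 * (c * c + c) + 1 + d * d = 0" using h by simp
  have "0 < 1 + d * d" by (simp add: add_pos_nonneg)
  then have "0 < c * c + c" using p by (simp add: zero_less_mult_iff)
  moreover have "0 \<le> d * d" by simp
  ultimately show False using e by (smt (verit))
qed

lemma alg_e: fixes c d :: real
  shows "2 * c * (2 * c) * (1 + d * d) = 2 * d * (2 * d) * (1 + c * c) \<Longrightarrow> c = d \<or> c = - d"
proof -
  assume h: "2 * c * (2 * c) * (1 + d * d) = 2 * d * (2 * d) * (1 + c * c)"
  have id: "2 * c * (2 * c) * (1 + d * d) - 2 * d * (2 * d) * (1 + c * c) = 4 * ((c - d) * (c + d))" by algebra
  have "4 * ((c - d) * (c + d)) = 0" using id h by (metis diff_self)
  then have "(c - d) * (c + d) = 0" by (simp only: mult_eq_0_iff) simp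
  then have "c - d = 0 \<or> c + d = 0" by (simp only: mult_eq_0_iff)
  then show ?thesis by arith
qed

lemma main_alg:
  fixes c c' :: real
  assumes i: "i \<in> {1,2,3,4,5}" and j: "j \<in> {1,2,3,4,5}"
    and F1: "Fv i c * Fv i c * Rv j c' = Fv j c' * Fv j c' * Rv i c"
    and F2: "0 < Rv i c * Rv j c'"
  shows "((i \<in> {1,4} \<and> j \<in> {1,4})
     \<or> (i \<in> {2,3} \<and> j \<in> {2,3} \<and> (c = c' \<or> c = -1 - c'))
     \<or> (i = 5 \<and> j = 5 \<and> (c = c' \<or> c = - c')))"
proof -
  have ci: "i \<in> {1,4} \<or> i \<in> {2,3} \<or> i = 5" using i by auto
  have cj: "j \<in> {1,4} \<or> j \<in> {2,3} \<or> j = 5" using j by auto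
  show ?thesis
  proof (cases "i \<in> {1,4}")
    case I: True
    show ?thesis
    proof (cases "j \<in> {1,4}")
      case True then show ?thesis using I by simp
    next
      case J: False
      show ?thesis
      proof (cases "j \<in> {2,3}")
        case True then show ?thesis using F1 RF14[OF I] RF23[OF True] alg_a[of c'] by simp
      next
        case False then have "j = 5" using J cj by blast
        then show ?thesis using F1 RF14[OF I] RF5 alg_b[of c'] by simp
      qed
    qed
  next
    case I: False
    show ?thesis
    proof (cases "i \<in> {2,3}")
      case I2: True
      show ?thesis
      proof (cases "j \<in> {1,4}")
        case True then show ?thesis using F1 RF14[OF True] RF23[OF I2] alg_a[of c] by simp
      next
        case J: False
        show ?thesis
        proof (cases "j \<in> {2,3}")
          case True then show ?thesis using F1 RF23[OF I2] RF23[OF True] alg_c[of c c'] I2 by simp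
        next
          case False then have "j = 5" using J cj by blast
          then show ?thesis using F1 F2 RF23[OF I2] RF5 alg_d[of c c'] by simp
        qed
      qed
    next
      case False then have I5: "i = 5" using I ci by blast
      show ?thesis
      proof (cases "j \<in> {1,4}")
        case True then show ?thesis using F1 RF14[OF True] RF5[OF I5] alg_b[of c] by simp
      next
        case J: False
        show ?thesis
        proof (cases "j \<in> {2,3}")
          case True then show ?thesis using F1 F2 RF23[OF True] RF5[OF I5] alg_d[of c' c] by (simp add: mult.commute)
        next
          case False then have "j = 5" using J cj by blast
          then show ?thesis using F1 RF5 alg_e[of c c'] I5 by simp
        qed
      qed
    qed
  qed
qed

definition Av :: "nat \<Rightarrow> real \<Rightarrow> real" where
  "Av i c = (if i = 1 \<or> i = 2 then -1 else if i = 3 \<or> i = 4 then 0 else 1)"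
definition Cv :: "nat \<Rightarrow> real \<Rightarrow> real" where
  "Cv i c = (if i = 1 \<or> i = 4 then 1 else if i = 2 \<or> i = 3 then c else 0)"
definition Ev :: "nat \<Rightarrow> real \<Rightarrow> real" where
  "Ev i c = (if i = 1 \<or> i = 2 \<or> i = 3 then 0 else if i = 4 then c else 1 + c^2)"

lemma GammaF_Gam: "i \<in> {1,2,3,4,5} \<Longrightarrow> GammaF i c = Gam (Av i c) 0 (Cv i c) 0 (Ev i c) (Fv i c)"
  by (auto simp: GammaF_def Av_def Cv_def Ev_def Fv_def)

lemma r_eq: "i \<in> {1,2,3,4,5} \<Longrightarrow> Av i c * Ev i c + Cv i c * Fv i c - Cv i c * Cv i c = Rv i c"
  by (auto simp: Av_def Cv_def Ev_def Fv_def Rv_def algebra_simps power2_eq_square)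

lemma adm_range: "admissible i c \<Longrightarrow> i \<in> {1,2,3,4,5}"
  by (auto simp: admissible_def)

lemma adm_r: "admissible i c \<Longrightarrow> Rv i c \<noteq> 0"
proof -
  assume a: "admissible i c"
  show ?thesis
  proof (cases "i \<in> {2,3}")
    case True
    then have "c \<noteq> 0" "c + 1 \<noteq> 0" using a by (auto simp: admissible_def)
    then have "c * (c + 1) \<noteq> 0" by simp
    then show ?thesis using True by (auto simp: Rv_def algebra_simps)
  next
    case False
    have "0 < 1 + c * c" by (simp add: add_pos_nonneg)
    then show ?thesis using False by (auto simp: Rv_def)
  qed
qed

lemma forward:
  assumes "admissible i c" "admissible j c'" "affinely_equivalent (GammaF i c) (GammaF j c')"
  shows "Fv i c * Fv i c * Rv j c' = Fv j c' * Fv j c' * Rv i c \<and> 0 < Rv i c * Rv j c'"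
proof -
  have i: "i \<in> {1,2,3,4,5}" and j: "j \<in> {1,2,3,4,5}" using assms adm_range by blast+
  obtain U V T S where UT: "open U" "U \<noteq> {}" "\<forall>x\<in>U. S (T x) = x" "smooth_map_on U T"
      "pullback_eq U T (Gam (Av i c) 0 (Cv i c) 0 (Ev i c) (Fv i c)) (Gam (Av j c') 0 (Cv j c') 0 (Ev j c') (Fv j c'))"
    using assms(3) unfolding GammaF_Gam[OF i] GammaF_Gam[OF j] affinely_equivalent_def by blast
  have r: "Av i c * Ev i c + Cv i c * Fv i c - Cv i c * Cv i c \<noteq> 0"
    using r_eq[OF i] adm_r[OF assms(1)] by simp
  show ?thesis using invariant[OF UT r] r_eq[OF i, of c] r_eq[OF j, of c'] by simp
qed

theorem theorem3p7:
  fixes i j :: nat and c c' :: real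
  assumes "admissible i c" and "admissible j c'"
  shows "affinely_equivalent (GammaF i c) (GammaF j c') \<longleftrightarrow>
    ((i \<in> {1,4} \<and> j \<in> {1,4})
     \<or> (i \<in> {2,3} \<and> j \<in> {2,3} \<and> (c = c' \<or> c = -1 - c'))
     \<or> (i = 5 \<and> j = 5 \<and> (c = c' \<or> c = - c')))"
proof
  assume ae: "affinely_equivalent (GammaF i c) (GammaF j c')"
  show "((i \<in> {1,4} \<and> j \<in> {1,4})
     \<or> (i \<in> {2,3} \<and> j \<in> {2,3} \<and> (c = c' \<or> c = -1 - c'))
     \<or> (i = 5 \<and> j = 5 \<and> (c = c' \<or> c = - c')))"
    using forward[OF assms ae] by (intro main_alg adm_range[OF assms(1)] adm_range[OF assms(2)]) auto
next
  assume h: "((i \<in> {1,4} \<and> j \<in> {1,4})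
     \<or> (i \<in> {2,3} \<and> j \<in> {2,3} \<and> (c = c' \<or> c = -1 - c'))
     \<or> (i = 5 \<and> j = 5 \<and> (c = c' \<or> c = - c')))"
  consider (a11) "i = 1" "j = 1" | (a14) "i = 1" "j = 4" | (a41) "i = 4" "j = 1" | (a44) "i = 4" "j = 4"
    | (b22) "i = 2" "j = 2" "c = c'" | (b22') "i = 2" "j = 2" "c = -1 - c'"
    | (b33) "i = 3" "j = 3" "c = c'" | (b33') "i = 3" "j = 3" "c = -1 - c'"
    | (b23) "i = 2" "j = 3" "c = c'" | (b23') "i = 2" "j = 3" "c = -1 - c'"
    | (b32) "i = 3" "j = 2" "c = c'" | (b32') "i = 3" "j = 2" "c = -1 - c'"
    | (c55) "i = 5" "j = 5" "c = c'" | (c55') "i = 5" "j = 5" "c = - c'"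
  proof -
    have "(i = 1 \<or> i = 4) \<and> (j = 1 \<or> j = 4) \<or> (i = 2 \<or> i = 3) \<and> (j = 2 \<or> j = 3) \<and> (c = c' \<or> c = -1 - c')
      \<or> i = 5 \<and> j = 5 \<and> (c = c' \<or> c = - c')" using h by simp
    then show thesis by (elim disjE conjE; simp add: that)
  qed
  then show "affinely_equivalent (GammaF i c) (GammaF j c')"
  proof cases
    case a11
    have "affinely_equivalent (Gam (-1) 0 1 0 0 2) (Gam (-1) 0 1 0 0 2)" by (rule ae_Pk[where k=0]) simp_all
    then show ?thesis using a11 by (simp add: GammaF_def)
  next
    case a14
    have "affinely_equivalent (Gam (-1) 0 1 0 0 2) (Gam 0 0 1 0 c' 2)" by (rule ae_E[where k="-c'/2"]) simp_all
    then show ?thesis using a14 by (simp add: GammaF_def)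
  next
    case a41
    have "affinely_equivalent (Gam 0 0 1 0 c 2) (Gam (-1) 0 1 0 0 2)" by (rule ae_Lg[where k="-c/2"]) simp_all
    then show ?thesis using a41 by (simp add: GammaF_def)
  next
    case a44
    have "affinely_equivalent (Gam 0 0 1 0 c 2) (Gam 0 0 1 0 c' 2)" by (rule ae_Pk[where k="(c - c')/2"]) (simp_all add: field_simps)
    then show ?thesis using a44 by (simp add: GammaF_def)
  next
    case b22
    have "affinely_equivalent (Gam (-1) 0 c 0 0 (1 + 2*c)) (Gam (-1) 0 c 0 0 (1 + 2*c))" by (rule ae_Pk[where k=0]) simp_all
    then show ?thesis using b22 by (simp add: GammaF_def)
  next
    case b22'
    have "affinely_equivalent (Gam (-1) 0 c 0 0 (1 + 2*c)) (Gam (-1) 0 c' 0 0 (1 + 2*c'))" by (rule ae_L) (use b22' in simp_all)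
    then show ?thesis using b22' by (simp add: GammaF_def)
  next
    case b33
    have "affinely_equivalent (Gam 0 0 c 0 0 (1 + 2*c)) (Gam 0 0 c 0 0 (1 + 2*c))" by (rule ae_Pk[where k=0]) simp_all
    then show ?thesis using b33 by (simp add: GammaF_def)
  next
    case b33'
    have "affinely_equivalent (Gam 0 0 c 0 0 (1 + 2*c)) (Gam 0 0 c' 0 0 (1 + 2*c'))" by (rule ae_M) (use b33' in simp_all)
    then show ?thesis using b33' by (simp add: GammaF_def)
  next
    case b23
    have "affinely_equivalent (Gam (-1) 0 c 0 0 (1 + 2*c)) (Gam 0 0 c 0 0 (1 + 2*c))" by (rule ae_E[where k=0]) simp_all
    then show ?thesis using b23 by (simp add: GammaF_def)
  next
    case b23'
    have "affinely_equivalent (Gam (-1) 0 c 0 0 (1 + 2*c)) (Gam 0 0 c' 0 0 (1 + 2*c'))" by (rule ae_F) (use b23' in simp_all)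
    then show ?thesis using b23' by (simp add: GammaF_def)
  next
    case b32
    have "affinely_equivalent (Gam 0 0 c 0 0 (1 + 2*c)) (Gam (-1) 0 c 0 0 (1 + 2*c))" by (rule ae_Lg[where k=0]) simp_all
    then show ?thesis using b32 by (simp add: GammaF_def)
  next
    case b32'
    have "affinely_equivalent (Gam 0 0 c 0 0 (1 + 2*c)) (Gam (-1) 0 c' 0 0 (1 + 2*c'))" by (rule ae_H) (use b32' in simp_all)
    then show ?thesis using b32' by (simp add: GammaF_def)
  next
    case c55
    have "affinely_equivalent (Gam 1 0 0 0 (1 + c^2) (2*c)) (Gam 1 0 0 0 (1 + c^2) (2*c))" by (rule ae_Pk[where k=0]) simp_all
    then show ?thesis using c55 by (simp add: GammaF_def)
  next
    case c55'
    have "affinely_equivalent (Gam 1 0 0 0 (1 + c^2) (2*c)) (Gam 1 0 0 0 (1 + c'^2) (2*c'))" by (rule ae_R) (use c55' in simp_all)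
    then show ?thesis using c55' by (simp add: GammaF_def)
  qed
qed

end
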